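(* Let $\varphi \in L^1(\mathbb{R}^n)$ satisfy $\int_{\mathbb{R}^n}\varphi = 1$ and $\int_{\mathbb{R}^n}|y|^{1/2}|\varphi(y)|\,dy < \infty$, and for $\varepsilon>0$ let $\varphi_\varepsilon(x) = \varepsilon^{-n}\varphi(x/\varepsilon)$. Let $T>0$. Then for every $U \in L^1((0,T); B(\mathbb{R}^n))$, \[ \lim_{\varepsilon\to0}\int_0^T \|U(t,\cdot) - \varphi_\varepsilon * U(t,\cdot)\|_{B(\mathbb{R}^n)}\,dt = 0, \] where the convolution is in the spatial variables only.
   Context: Let $D_0 = \{|x|\le 1\}$, $D_j = \{2^{j-1} < |x| \le 2^j\}$ ($j\in\mathbb{N}$) in $\mathbb{R}^n$. $B(\mathbb{R}^n)$ is the Banach space with norm $\|f\|_{B(\mathbb{R}^n)} = \sum_{j\in\mathbb{N}_0} 2^{j/2}\|f\|_{L^2(D_j)}$. *)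

theory Defs
  imports "HOL-Analysis.Analysis"
begin

definition dyadic_shell :: "nat \<Rightarrow> 'a::euclidean_space set" where
  "dyadic_shell j = (if j = 0 then {x. norm x \<le> 1}
                     else {x. 2 ^ (j - 1) < norm x \<and> norm x \<le> 2 ^ j})"

definition L2_norm_on :: "('a::euclidean_space \<Rightarrow> real) \<Rightarrow> 'a set \<Rightarrow> ennreal" where
  "L2_norm_on f A = (let I = (\<integral>\<^sup>+ x \<in> A. ennreal ((f x)\<^sup>2) \<partial>lborel)
                     in if I = \<infinity> then \<infinity> else ennreal (sqrt (enn2real I)))"

text \<open>The norm of B(R^n): sum over j of 2^(j/2) times the L^2(D_j) norm (extended-valued;
  f belongs to B iff f is Lebesgue measurable and this quantity is finite).\<close>
definition B_norm :: "('a::euclidean_space \<Rightarrow> real) \<Rightarrow> ennreal" where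
  "B_norm f = (\<Sum>j. ennreal (2 powr (real j / 2)) * L2_norm_on f (dyadic_shell j))"

definition mollify :: "('a::euclidean_space \<Rightarrow> real) \<Rightarrow> real \<Rightarrow> 'a \<Rightarrow> real" where
  "mollify \<phi> \<epsilon> x = (1 / \<epsilon>) ^ DIM('a) * \<phi> ((1 / \<epsilon>) *\<^sub>R x)"

definition convol :: "('a::euclidean_space \<Rightarrow> real) \<Rightarrow> ('a \<Rightarrow> real) \<Rightarrow> 'a \<Rightarrow> real" where
  "convol f g x = (\<integral> y. f (x - y) * g y \<partial>lborel)"

end

theory Submission
  imports Defs
begin

definition esq :: "ennreal \<Rightarrow> ennreal" where
  "esq I = (if I = \<infinity> then \<infinity> else ennreal (sqrt (enn2real I)))"

lemma esq_power2[simp]: "(esq a)^2 = a"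
  by (cases a) (auto simp: esq_def ennreal_power)

lemma esq_of_power2[simp]: "esq (a^2) = a"
  by (cases a) (auto simp: esq_def ennreal_power)

lemma power2_ennreal_mono_iff: "(a::ennreal)^2 \<le> b^2 \<longleftrightarrow> a \<le> b"
proof
  assume h: "a^2 \<le> b^2"
  show "a \<le> b"
  proof (rule ccontr)
    assume "\<not> a \<le> b"
    then have "b < a" by simp
    then have "b^2 < a^2"
      by (cases a; cases b) (auto simp: ennreal_power ennreal_less_iff power_strict_mono)
    with h show False by simp
  qed
qed (rule power_mono_ennreal)

lemma esq_le_iff: "esq a \<le> b \<longleftrightarrow> a \<le> b^2"
  by (metis esq_power2 power2_ennreal_mono_iff)

lemma le_esq_iff: "b \<le> esq a \<longleftrightarrow> b^2 \<le> a"
  by (metis esq_power2 power2_ennreal_mono_iff)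

lemma esq_mono: "a \<le> b \<Longrightarrow> esq a \<le> esq b"
  by (metis esq_power2 power2_ennreal_mono_iff)

lemma esq_mult: "esq (a * b) = esq a * esq b"
  by (metis esq_of_power2 esq_power2 power_mult_distrib)

lemma esq_0[simp]: "esq 0 = 0"
  using esq_of_power2[of 0] by simp

lemma esq_top[simp]: "esq \<infinity> = \<infinity>"
  by (simp add: esq_def)

lemma esq_eq_top_iff[simp]: "esq a = \<infinity> \<longleftrightarrow> a = \<infinity>"
  by (metis esq_power2 esq_top power_eq_top_ennreal_iff)

lemma esq_mono': "mono esq"
  by (simp add: esq_mono monoI)

lemma borel_measurable_esq[measurable]: "esq \<in> borel_measurable borel"
  unfolding esq_def by measurable

definition L2e :: "('a::euclidean_space \<Rightarrow> ennreal) \<Rightarrow> 'a set \<Rightarrow> ennreal" where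
  "L2e g A = esq (\<integral>\<^sup>+x. g x ^ 2 * indicator A x \<partial>lborel)"

definition Be :: "('a::euclidean_space \<Rightarrow> ennreal) \<Rightarrow> ennreal" where
  "Be g = (\<Sum>j. ennreal (2 powr (real j / 2)) * L2e g (dyadic_shell j))"

lemma L2_norm_on_eq: "L2_norm_on f A = L2e (\<lambda>x. ennreal \<bar>f x\<bar>) A"
  by (simp add: L2_norm_on_def L2e_def esq_def Let_def ennreal_power)

lemma B_norm_eq: "B_norm f = Be (\<lambda>x. ennreal \<bar>f x\<bar>)"
  by (simp add: B_norm_def Be_def L2_norm_on_eq)

lemma L2e_mono: "(\<And>x. x \<in> A \<Longrightarrow> g x \<le> g' x) \<Longrightarrow> L2e g A \<le> L2e g' A"
  unfolding L2e_def
  by (intro esq_mono nn_integral_mono) (auto simp: indicator_def intro: power_mono_ennreal)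

lemma L2e_mono_set: "A \<subseteq> A' \<Longrightarrow> L2e g A \<le> L2e g A'"
  unfolding L2e_def
  by (intro esq_mono nn_integral_mono) (auto simp: indicator_def)

lemma L2e_cmult:
  assumes [measurable]: "g \<in> borel_measurable borel" "A \<in> sets borel"
  shows "L2e (\<lambda>x. c * g x) A = c * L2e g A"
proof -
  have "(\<integral>\<^sup>+x. (c * g x) ^ 2 * indicator A x \<partial>lborel) = c^2 * (\<integral>\<^sup>+x. g x ^ 2 * indicator A x \<partial>lborel)"
    by (subst nn_integral_cmult[symmetric]) (auto simp: power_mult_distrib mult.assoc)
  then show ?thesis unfolding L2e_def by (simp add: esq_mult)
qed

lemma nn_CS:
  assumes [measurable]: "f \<in> borel_measurable M" "g \<in> borel_measurable M"
  shows "(\<integral>\<^sup>+x. f x * g x \<partial>M) \<le> esq (\<integral>\<^sup>+x. f x ^ 2 \<partial>M) * esq (\<integral>\<^sup>+x. g x ^ 2 \<partial>M)"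
  unfolding esq_mult[symmetric] le_esq_iff by (rule Cauchy_Schwarz_nn_integral) auto

lemma L2e_CS:
  assumes [measurable]: "f \<in> borel_measurable borel" "g \<in> borel_measurable borel" "A \<in> sets borel"
  shows "(\<integral>\<^sup>+x. f x * g x * indicator A x \<partial>lborel) \<le> L2e f A * L2e g A"
proof -
  have "(\<integral>\<^sup>+x. f x * g x * indicator A x \<partial>lborel) = (\<integral>\<^sup>+x. (f x * indicator A x) * (g x * indicator A x) \<partial>lborel)"
    by (intro nn_integral_cong) (auto simp: indicator_def)
  also have "\<dots> \<le> esq (\<integral>\<^sup>+x. (f x * indicator A x) ^ 2 \<partial>lborel) * esq (\<integral>\<^sup>+x. (g x * indicator A x) ^ 2 \<partial>lborel)"
    by (rule nn_CS) auto
  also have "\<dots> = L2e f A * L2e g A"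
  proof -
    have "(\<integral>\<^sup>+x. (f x * indicator A x) ^ 2 \<partial>lborel) = (\<integral>\<^sup>+x. f x ^ 2 * indicator A x \<partial>lborel)"
         "(\<integral>\<^sup>+x. (g x * indicator A x) ^ 2 \<partial>lborel) = (\<integral>\<^sup>+x. g x ^ 2 * indicator A x \<partial>lborel)"
      by (auto intro!: nn_integral_cong simp: indicator_def)
    then show ?thesis unfolding L2e_def by simp
  qed
  finally show ?thesis .
qed

lemma L2e_add:
  assumes [measurable]: "f \<in> borel_measurable borel" "g \<in> borel_measurable borel" "A \<in> sets borel"
  shows "L2e (\<lambda>x. f x + g x) A \<le> L2e f A + L2e g A"
proof -
  have "(\<integral>\<^sup>+x. (f x + g x) ^ 2 * indicator A x \<partial>lborel) =
     (\<integral>\<^sup>+x. f x ^ 2 * indicator A x + (2 * (f x * g x * indicator A x) + g x ^ 2 * indicator A x) \<partial>lborel)"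
    by (intro nn_integral_cong) (simp add: power2_sum algebra_simps)
  also have "\<dots> = (\<integral>\<^sup>+x. f x ^ 2 * indicator A x \<partial>lborel) + (2 * (\<integral>\<^sup>+x. f x * g x * indicator A x \<partial>lborel)
       + (\<integral>\<^sup>+x. g x ^ 2 * indicator A x \<partial>lborel))"
    by (simp add: nn_integral_add nn_integral_cmult)
  also have "\<dots> \<le> (L2e f A)^2 + (2 * (L2e f A * L2e g A) + (L2e g A)^2)"
    by (intro add_mono mult_left_mono L2e_CS order.refl) (auto simp: L2e_def)
  also have "\<dots> = (L2e f A + L2e g A)^2"
    by (simp add: power2_sum algebra_simps)
  finally show ?thesis unfolding L2e_def esq_le_iff .
qed

lemma L2e_Un:
  assumes [measurable]: "f \<in> borel_measurable borel" "A \<in> sets borel" "B \<in> sets borel"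
  shows "L2e f (A \<union> B) \<le> L2e f A + L2e f B"
proof -
  have "(\<integral>\<^sup>+x. f x ^ 2 * indicator (A \<union> B) x \<partial>lborel) \<le>
     (\<integral>\<^sup>+x. f x ^ 2 * indicator A x + f x ^ 2 * indicator B x \<partial>lborel)"
    by (intro nn_integral_mono) (auto simp: indicator_def)
  also have "\<dots> = (L2e f A)^2 + (L2e f B)^2"
    by (simp add: nn_integral_add L2e_def)
  also have "\<dots> \<le> (L2e f A + L2e f B)^2"
    by (simp add: power2_eq_square algebra_simps add_increasing)
  finally show ?thesis unfolding L2e_def esq_le_iff .
qed

lemma L2e_UN:
  assumes [measurable]: "f \<in> borel_measurable borel" "finite I" "\<And>i. i \<in> I \<Longrightarrow> A i \<in> sets borel"
  shows "L2e f (\<Union>i\<in>I. A i) \<le> (\<Sum>i\<in>I. L2e f (A i))"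
  using assms(2,3)
proof (induction I rule: finite_induct)
  case empty
  then show ?case by (simp add: L2e_def)
next
  case (insert i I)
  have "L2e f (\<Union>i\<in>insert i I. A i) = L2e f (A i \<union> (\<Union>i\<in>I. A i))" by simp
  also have "\<dots> \<le> L2e f (A i) + L2e f (\<Union>i\<in>I. A i)"
    using insert by (intro L2e_Un) auto
  also have "\<dots> \<le> L2e f (A i) + (\<Sum>i\<in>I. L2e f (A i))"
    using insert by (intro add_left_mono) auto
  finally show ?case using insert by simp
qed

lemma L2e_Minkowski:
  fixes h :: "'b::euclidean_space \<times> 'a::euclidean_space \<Rightarrow> ennreal"
  assumes h[measurable]: "h \<in> borel_measurable (lborel \<Otimes>\<^sub>M lborel)" and A[measurable]: "A \<in> sets borel"
  shows "L2e (\<lambda>x. \<integral>\<^sup>+y. h (y, x) \<partial>lborel) A \<le> (\<integral>\<^sup>+y. L2e (\<lambda>x. h (y, x)) A \<partial>lborel)"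
proof -
  define F where "F x = (\<integral>\<^sup>+y. h (y, x) \<partial>lborel)" for x
  define L where "L y = L2e (\<lambda>x. h (y, x)) A" for y
  have hs[measurable]: "(\<lambda>(x, y). h (y, x)) \<in> borel_measurable (lborel \<Otimes>\<^sub>M lborel)"
    by measurable
  have F[measurable]: "F \<in> borel_measurable lborel"
    unfolding F_def by measurable
  have L[measurable]: "L \<in> borel_measurable lborel"
    unfolding L_def L2e_def by measurable
  have hy[measurable]: "(\<lambda>x. h (y, x)) \<in> borel_measurable borel" for y
    using measurable_Pair2[OF h, of y] by simp
  have sq: "F x ^ 2 = (\<integral>\<^sup>+y. \<integral>\<^sup>+y'. h (y, x) * h (y', x) \<partial>lborel \<partial>lborel)" for x
  proof -
    have "F x ^ 2 = (\<integral>\<^sup>+y. h (y, x) * F x \<partial>lborel)"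
      unfolding power2_eq_square by (subst nn_integral_multc) (auto simp: F_def)
    also have "\<dots> = (\<integral>\<^sup>+y. \<integral>\<^sup>+y'. h (y, x) * h (y', x) \<partial>lborel \<partial>lborel)"
      unfolding F_def by (intro nn_integral_cong, subst nn_integral_cmult) auto
    finally show ?thesis .
  qed
  have "(\<integral>\<^sup>+x. F x ^ 2 * indicator A x \<partial>lborel) =
      (\<integral>\<^sup>+x. \<integral>\<^sup>+y. \<integral>\<^sup>+y'. h (y, x) * h (y', x) * indicator A x \<partial>lborel \<partial>lborel \<partial>lborel)"
    unfolding sq
  proof (intro nn_integral_cong)
    fix x
    have "(\<integral>\<^sup>+y. \<integral>\<^sup>+y'. h (y, x) * h (y', x) \<partial>lborel \<partial>lborel) * indicator A x =
        (\<integral>\<^sup>+y. (\<integral>\<^sup>+y'. h (y, x) * h (y', x) \<partial>lborel) * indicator A x \<partial>lborel)"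
      by (rule nn_integral_multc[symmetric]) measurable
    also have "\<dots> = (\<integral>\<^sup>+y. \<integral>\<^sup>+y'. h (y, x) * h (y', x) * indicator A x \<partial>lborel \<partial>lborel)"
      by (intro nn_integral_cong nn_integral_multc[symmetric]) measurable
    finally show "(\<integral>\<^sup>+y. \<integral>\<^sup>+y'. h (y, x) * h (y', x) \<partial>lborel \<partial>lborel) * indicator A x =
        (\<integral>\<^sup>+y. \<integral>\<^sup>+y'. h (y, x) * h (y', x) * indicator A x \<partial>lborel \<partial>lborel)" .
  qed
  also have "\<dots> = (\<integral>\<^sup>+y. \<integral>\<^sup>+x. \<integral>\<^sup>+y'. h (y, x) * h (y', x) * indicator A x \<partial>lborel \<partial>lborel \<partial>lborel)"
    by (rule lborel_pair.Fubini'[symmetric]) measurable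
  also have "\<dots> = (\<integral>\<^sup>+y. \<integral>\<^sup>+y'. \<integral>\<^sup>+x. h (y, x) * h (y', x) * indicator A x \<partial>lborel \<partial>lborel \<partial>lborel)"
    by (intro nn_integral_cong lborel_pair.Fubini'[symmetric]) measurable
  also have "\<dots> \<le> (\<integral>\<^sup>+y. \<integral>\<^sup>+y'. L y * L y' \<partial>lborel \<partial>lborel)"
    unfolding L_def by (intro nn_integral_mono L2e_CS) auto
  also have "\<dots> = (\<integral>\<^sup>+y. L y \<partial>lborel) ^ 2"
    unfolding power2_eq_square
    by (subst nn_integral_multc[symmetric], simp, intro nn_integral_cong, subst nn_integral_cmult) auto
  finally show ?thesis unfolding L2e_def esq_le_iff F_def L_def .
qed

lemma Be_Minkowski:
  fixes h :: "'b::euclidean_space \<times> 'a::euclidean_space \<Rightarrow> ennreal"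
  assumes h[measurable]: "h \<in> borel_measurable (lborel \<Otimes>\<^sub>M lborel)"
  shows "Be (\<lambda>x. \<integral>\<^sup>+y. h (y, x) \<partial>lborel) \<le> (\<integral>\<^sup>+y. Be (\<lambda>x. h (y, x)) \<partial>lborel)"
proof -
  have D[measurable]: "dyadic_shell j \<in> sets borel" for j
    unfolding dyadic_shell_def by auto
  have "Be (\<lambda>x. \<integral>\<^sup>+y. h (y, x) \<partial>lborel) \<le>
     (\<Sum>j. ennreal (2 powr (real j / 2)) * (\<integral>\<^sup>+y. L2e (\<lambda>x. h (y, x)) (dyadic_shell j) \<partial>lborel))"
    unfolding Be_def by (intro suminf_le mult_left_mono L2e_Minkowski) auto
  also have "\<dots> = (\<Sum>j. (\<integral>\<^sup>+y. ennreal (2 powr (real j / 2)) * L2e (\<lambda>x. h (y, x)) (dyadic_shell j) \<partial>lborel))"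
    by (intro suminf_cong nn_integral_cmult[symmetric]) (unfold L2e_def, measurable)
  also have "\<dots> = (\<integral>\<^sup>+y. Be (\<lambda>x. h (y, x)) \<partial>lborel)"
    unfolding Be_def by (rule nn_integral_suminf[symmetric]) (unfold L2e_def, measurable)
  finally show ?thesis .
qed

lemma two_powr_half: "2 powr (real j / 2) = sqrt 2 ^ j"
proof -
  have "2 powr (real j / 2) = (2 powr (1/2)) powr real j"
    by (simp add: powr_powr)
  also have "\<dots> = sqrt 2 ^ j"
    by (simp add: powr_half_sqrt powr_realpow)
  finally show ?thesis .
qed

lemma Be_def': "Be g = (\<Sum>j. ennreal (sqrt 2 ^ j) * L2e g (dyadic_shell j))"
  unfolding Be_def two_powr_half ..

lemma dyadic_shell_sets[measurable]: "dyadic_shell j \<in> sets borel"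
  unfolding dyadic_shell_def by auto

lemma dyadic_shell_le: "x \<in> dyadic_shell j \<Longrightarrow> norm x \<le> 2 ^ j"
  by (auto simp: dyadic_shell_def split: if_splits)

lemma dyadic_shell_gt: "x \<in> dyadic_shell j \<Longrightarrow> j \<ge> 1 \<Longrightarrow> 2 ^ (j - 1) < norm x"
  by (auto simp: dyadic_shell_def split: if_splits)

lemma dyadic_shell_exists: "norm (x::'a::euclidean_space) \<le> 2 ^ m \<Longrightarrow> \<exists>k\<le>m. x \<in> dyadic_shell k"
proof (induction m)
  case 0
  then show ?case by (auto simp: dyadic_shell_def)
next
  case (Suc m)
  show ?case
  proof (cases "norm x \<le> 2 ^ m")
    case True
    then show ?thesis using Suc.IH by (meson le_SucI)
  next
    case False
    then have "x \<in> dyadic_shell (Suc m)" using Suc.prems by (auto simp: dyadic_shell_def)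
    then show ?thesis by blast
  qed
qed

lemma cball_sub_shells: "cball (0::'a::euclidean_space) (2 ^ m) \<subseteq> (\<Union>k\<in>{..m}. dyadic_shell k)"
  using dyadic_shell_exists by (fastforce simp: dist_norm)

lemma shell_translate_big:
  fixes x h :: "'a::euclidean_space"
  assumes x: "x \<in> dyadic_shell j" and j: "j \<ge> p + 2" and h: "norm h \<le> 2 ^ p"
  shows "x + h \<in> dyadic_shell (j - 1) \<union> dyadic_shell j \<union> dyadic_shell (Suc j)"
proof -
  have j1: "j \<ge> 1" using j by simp
  have a: "2 ^ (j - 1) < norm x" using dyadic_shell_gt[OF x j1] .
  have b: "norm x \<le> 2 ^ j" using dyadic_shell_le[OF x] .
  have pj: "(2::real) ^ p \<le> 2 ^ (j - 2)" using j by (intro power_increasing) auto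
  have e1: "(2::real) ^ (j - 1) = 2 * 2 ^ (j - 2)" using j
  proof -
    have "j - 1 = Suc (j - 2)" using j by simp
    then show ?thesis by simp
  qed
  have e2: "(2::real) ^ j = 2 * 2 ^ (j - 1)" using j1
  proof -
    have "j = Suc (j - 1)" using j1 by simp
    then show ?thesis by (metis power_Suc)
  qed
  have "norm (x + h) \<ge> norm x - norm h" using norm_triangle_ineq[of "x+h" "-h"] by simp
  then have lo: "2 ^ (j - 2) < norm (x + h)" using a h pj e1 by linarith
  have "norm (x + h) \<le> norm x + norm h" by (rule norm_triangle_ineq)
  moreover have "(2::real) ^ Suc j = 2 * 2 ^ j" by simp
  moreover have "(0::real) \<le> 2 ^ (j - 2)" by simp
  ultimately have hi: "norm (x + h) \<le> 2 ^ Suc j" using b h pj e1 e2 by linarith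
  have j2: "j - 1 \<ge> 1" "j - 1 - 1 = j - 2" using j by auto
  show ?thesis
  proof (cases "norm (x + h) \<le> 2 ^ (j - 1)")
    case True
    then show ?thesis using lo j2 by (auto simp: dyadic_shell_def)
  next
    case F1: False
    show ?thesis
    proof (cases "norm (x + h) \<le> 2 ^ j")
      case True
      then show ?thesis using F1 j1 by (auto simp: dyadic_shell_def)
    next
      case False
      then show ?thesis using hi by (auto simp: dyadic_shell_def)
    qed
  qed
qed

lemma shell_translate_small:
  fixes x h :: "'a::euclidean_space"
  assumes x: "x \<in> dyadic_shell j" and j: "j \<le> p + 1" and h: "norm h \<le> 2 ^ p"
  shows "x + h \<in> cball 0 (2 ^ (p + 2))"
proof -
  have "norm x \<le> 2 ^ j" using dyadic_shell_le[OF x] .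
  also have "\<dots> \<le> 2 ^ (p + 1)" using j by (intro power_increasing) auto
  finally have "norm (x + h) \<le> 2 ^ (p + 1) + 2 ^ p"
    using norm_triangle_ineq[of x h] h by linarith
  also have "\<dots> \<le> 2 ^ (p + 2)" by simp
  finally show ?thesis by (simp add: mem_cball_0)
qed

lemma nn_integral_translate:
  fixes F :: "'a::euclidean_space \<Rightarrow> ennreal"
  assumes [measurable]: "F \<in> borel_measurable borel"
  shows "(\<integral>\<^sup>+x. F (x + h) \<partial>lborel) = (\<integral>\<^sup>+x. F x \<partial>lborel)"
proof -
  have "(\<integral>\<^sup>+x. F x \<partial>lborel) = (\<integral>\<^sup>+x. F x \<partial>(distr lborel borel ((+) h)))"
    by (simp add: lborel_distr_plus)
  also have "\<dots> = (\<integral>\<^sup>+x. F (h + x) \<partial>lborel)"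
    by (rule nn_integral_distr) auto
  finally show ?thesis by (simp add: add.commute)
qed

lemma L2e_translate_le:
  fixes g :: "'a::euclidean_space \<Rightarrow> ennreal"
  assumes [measurable]: "g \<in> borel_measurable borel" "A \<in> sets borel" "S \<in> sets borel"
    and sub: "\<And>x. x \<in> A \<Longrightarrow> x + h \<in> S"
  shows "L2e (\<lambda>x. g (x + h)) A \<le> L2e g S"
proof -
  have "(\<integral>\<^sup>+x. g (x + h) ^ 2 * indicator A x \<partial>lborel) \<le> (\<integral>\<^sup>+x. g (x + h) ^ 2 * indicator S (x + h) \<partial>lborel)"
    using sub by (intro nn_integral_mono) (auto simp: indicator_def)
  also have "\<dots> = (\<integral>\<^sup>+x. g x ^ 2 * indicator S x \<partial>lborel)"
    by (rule nn_integral_translate[where F="\<lambda>x. g x ^ 2 * indicator S x"]) measurable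
  finally show ?thesis unfolding L2e_def by (rule esq_mono)
qed

lemma geom_sqrt2: "(\<Sum>j<n. sqrt 2 ^ j) \<le> 4 * sqrt 2 ^ n"
proof (induction n)
  case 0
  then show ?case by simp
next
  case (Suc n)
  have s: "5 \<le> 4 * sqrt (2::real)"
  proof -
    have "5/4 \<le> sqrt (2::real)" by (rule real_le_rsqrt) (simp add: power2_eq_square)
    then show ?thesis by linarith
  qed
  have "(\<Sum>j<Suc n. sqrt 2 ^ j) \<le> 4 * sqrt 2 ^ n + sqrt 2 ^ n" using Suc by simp
  also have "\<dots> = 5 * sqrt 2 ^ n" by simp
  also have "\<dots> \<le> (4 * sqrt 2) * sqrt 2 ^ n" using s by (intro mult_right_mono) auto
  finally show ?case by (simp add: mult.assoc)
qed

lemma ennreal_suminf_Suc: "(f :: nat \<Rightarrow> ennreal) 0 + (\<Sum>j. f (Suc j)) = (\<Sum>j. f j)"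
  using suminf_offset[of f 1] by (simp add: summableI add.commute)

lemma ennreal_term_le_suminf: "(f :: nat \<Rightarrow> ennreal) i \<le> (\<Sum>j. f j)"
  using sum_le_suminf[of f "{i}"] by (simp add: summableI)

lemma Be_translate:
  fixes g :: "'a::euclidean_space \<Rightarrow> ennreal"
  assumes g[measurable]: "g \<in> borel_measurable borel" and h: "norm h \<le> 2 ^ p"
  shows "Be (\<lambda>x. g (x + h)) \<le> ennreal (8 * sqrt 2 ^ p + 5) * Be g"
proof -
  define L where "L k = L2e g (dyadic_shell k)" for k
  define c where "c k = ennreal (sqrt 2 ^ k)" for k
  define S where "S = (\<Sum>k<p+3. L k)"
  have BeL: "Be g = (\<Sum>j. c j * L j)" unfolding Be_def' c_def L_def ..
  have c1: "1 \<le> c k" for k unfolding c_def by (simp add: one_le_power)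
  have cS: "c (Suc k) = ennreal (sqrt 2) * c k" for k
    unfolding c_def by (simp add: ennreal_mult)
  have tb: "L2e (\<lambda>x. g (x + h)) (dyadic_shell j) \<le> (if j \<le> p + 1 then S else 0) + (L (j - 1) + L j + L (Suc j))" for j
  proof (cases "j \<le> p + 1")
    case True
    have "L2e (\<lambda>x. g (x + h)) (dyadic_shell j) \<le> L2e g (cball 0 (2 ^ (p + 2)))"
      by (intro L2e_translate_le shell_translate_small[OF _ True h]) auto
    also have "\<dots> \<le> L2e g (\<Union>k\<in>{..p+2}. dyadic_shell k)"
      by (intro L2e_mono_set cball_sub_shells)
    also have "\<dots> \<le> (\<Sum>k\<in>{..p+2}. L k)"
      unfolding L_def by (intro L2e_UN) auto
    also have "{..p+2} = {..<p+3}" by auto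
    finally show ?thesis using True unfolding S_def by (simp add: add_increasing2)
  next
    case False
    have "L2e (\<lambda>x. g (x + h)) (dyadic_shell j) \<le> L2e g (dyadic_shell (j - 1) \<union> dyadic_shell j \<union> dyadic_shell (Suc j))"
      using False by (intro L2e_translate_le shell_translate_big[OF _ _ h]) auto
    also have "\<dots> \<le> L2e g (dyadic_shell (j - 1) \<union> dyadic_shell j) + L (Suc j)"
      unfolding L_def by (intro L2e_Un g dyadic_shell_sets sets.Un)
    also have "\<dots> \<le> (L (j - 1) + L j) + L (Suc j)"
      unfolding L_def by (intro add_right_mono L2e_Un g dyadic_shell_sets)
    finally show ?thesis using False by simp
  qed
  have "Be (\<lambda>x. g (x + h)) \<le> (\<Sum>j. c j * ((if j \<le> p + 1 then S else 0) + (L (j - 1) + L j + L (Suc j))))"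
    unfolding Be_def' c_def[symmetric] by (intro suminf_le mult_left_mono tb) (auto simp: summableI)
  also have "\<dots> = (\<Sum>j. c j * (if j \<le> p + 1 then S else 0)) + ((\<Sum>j. c j * L (j - 1)) + (\<Sum>j. c j * L j) + (\<Sum>j. c j * L (Suc j)))"
    by (simp add: distrib_left suminf_add[symmetric] summableI)
  also have "(\<Sum>j. c j * (if j \<le> p + 1 then S else 0)) = (\<Sum>j<p+2. c j * (if j \<le> p + 1 then S else 0))"
    by (rule suminf_finite) auto
  also have "\<dots> = (\<Sum>j<p+2. c j * S)"
    by (intro sum.cong) auto
  also have "\<dots> = ennreal (\<Sum>j<p+2. sqrt 2 ^ j) * S"
    unfolding c_def sum_distrib_right[symmetric] by (subst sum_ennreal) auto
  also have "\<dots> \<le> ennreal (8 * sqrt 2 ^ p) * Be g"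
  proof (intro mult_mono)
    have "(\<Sum>j<p+2. sqrt 2 ^ j) \<le> 4 * sqrt 2 ^ (p + 2)" by (rule geom_sqrt2)
    also have "\<dots> = 8 * sqrt 2 ^ p" by (simp add: power_add)
    finally show "ennreal (\<Sum>j<p+2. sqrt 2 ^ j) \<le> ennreal (8 * sqrt 2 ^ p)" by (rule ennreal_leI)
    have "S \<le> (\<Sum>k<p+3. c k * L k)"
      unfolding S_def using c1 by (intro sum_mono) (metis mult_1 mult_right_mono zero_le)
    also have "\<dots> \<le> Be g" unfolding BeL by (intro sum_le_suminf) (auto simp: summableI)
    finally show "S \<le> Be g" .
  qed auto
  also have "(\<Sum>j. c j * L (j - 1)) \<le> Be g + ennreal (sqrt 2) * Be g"
  proof -
    have "(\<Sum>j. c j * L (j - 1)) = c 0 * L 0 + (\<Sum>j. c (Suc j) * L j)"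
      using ennreal_suminf_Suc[of "\<lambda>j. c j * L (j - 1)"] by simp
    also have "\<dots> = c 0 * L 0 + ennreal (sqrt 2) * Be g"
      unfolding BeL cS by (simp add: mult.assoc)
    also have "c 0 * L 0 \<le> Be g" unfolding BeL by (rule ennreal_term_le_suminf)
    finally show ?thesis by (simp add: add_right_mono)
  qed
  also have "(\<Sum>j. c j * L j) = Be g" unfolding BeL ..
  also have "(\<Sum>j. c j * L (Suc j)) \<le> Be g"
  proof -
    have "(\<Sum>j. c j * L (Suc j)) \<le> (\<Sum>j. c (Suc j) * L (Suc j))"
      using c1 unfolding cS
      by (intro suminf_le mult_right_mono) (auto simp: summableI intro: order_trans[OF _ mult_right_mono[of 1]])
    also have "\<dots> \<le> c 0 * L 0 + (\<Sum>j. c (Suc j) * L (Suc j))" by (simp add: add_increasing)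
    also have "\<dots> = Be g" unfolding BeL by (rule ennreal_suminf_Suc)
    finally show ?thesis .
  qed
  also have "ennreal (8 * sqrt 2 ^ p) * Be g + (Be g + ennreal (sqrt 2) * Be g + Be g + Be g)
      \<le> ennreal (8 * sqrt 2 ^ p) * Be g + 5 * Be g"
  proof (intro add_left_mono)
    have "ennreal (sqrt 2) \<le> 2"
      using ennreal_leI[of "sqrt 2" 2] by (simp add: real_sqrt_le_iff[of 2 4, simplified])
    then have "ennreal (sqrt 2) * Be g \<le> 2 * Be g" by (rule mult_right_mono) simp
    then have "Be g + ennreal (sqrt 2) * Be g + Be g + Be g \<le> Be g + 2 * Be g + Be g + Be g"
      by (intro add_mono order.refl)
    also have "\<dots> = (1 + 2 + 1 + 1) * Be g" by (simp only: distrib_right mult_1)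
    also have "(1 + 2 + 1 + 1 :: ennreal) = 5" by simp
    finally show "Be g + ennreal (sqrt 2) * Be g + Be g + Be g \<le> 5 * Be g" .
  qed
  also have "\<dots> = ennreal (8 * sqrt 2 ^ p + 5) * Be g"
    by (subst ennreal_plus) (auto simp: distrib_right)
  finally show ?thesis by (auto intro!: add_mono)
qed

lemma ennreal_tendsto_0I:
  assumes "\<And>e::real. e > 0 \<Longrightarrow> eventually (\<lambda>x. f x \<le> ennreal e) F"
  shows "(f \<longlongrightarrow> (0::ennreal)) F"
proof (rule order_tendstoI)
  fix a :: ennreal assume "a < 0" then show "eventually (\<lambda>x. a < f x) F" by simp
next
  fix a :: ennreal assume a: "0 < a"
  show "eventually (\<lambda>x. f x < a) F"
  proof (cases a)
    case (real r)
    with a have r: "r > 0" by auto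
    have "ennreal (r/2) < a" using real r by (simp add: ennreal_lessI)
    with assms[of "r/2"] r show ?thesis by (auto elim: eventually_mono)
  next
    case top
    have "eventually (\<lambda>x. f x \<le> ennreal 1) F" using assms[of 1] by simp
    then show ?thesis unfolding top by (rule eventually_mono) (rule le_less_trans[OF _ ennreal_less_top])
  qed
qed

lemma inner_compact_approx:
  fixes A :: "'a::euclidean_space set"
  assumes A[measurable]: "A \<in> sets borel" and fin: "emeasure lborel A < \<infinity>" and e: "e > 0"
  obtains K where "compact K" "K \<subseteq> A" "emeasure lborel (A - K) < ennreal e"
proof -
  define M where "M = density lborel (indicator A :: 'a \<Rightarrow> ennreal)"
  have sM: "sets M = sets borel" unfolding M_def by simp
  have eM: "emeasure M B = emeasure lborel (A \<inter> B)" if "B \<in> sets borel" for B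
    unfolding M_def using that
    by (subst emeasure_density) (auto simp: nn_integral_indicator[symmetric] indicator_inter_arith[symmetric] simp del: nn_integral_indicator intro!: nn_integral_cong)
  have "space M = UNIV" unfolding M_def by simp
  then have fM: "emeasure M (space M) \<noteq> \<infinity>" using eM[of UNIV] fin by simp
  have "emeasure M A = (SUP K \<in> {K. K \<subseteq> A \<and> compact K}. emeasure M K)"
    by (rule inner_regular[OF sM fM A])
  then have supeq: "emeasure lborel A = (SUP K \<in> {K. K \<subseteq> A \<and> compact K}. emeasure lborel K)"
    using eM by (auto simp: compact_imp_closed Int_absorb1 intro!: SUP_cong)
  have ne: "{K. K \<subseteq> A \<and> compact K} \<noteq> {}" by (auto intro!: exI[of _ "{}"])
  have "\<exists>K\<in>{K. K \<subseteq> A \<and> compact K}. emeasure lborel A < emeasure lborel K + ennreal e"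
    using fin by (intro SUP_approx_ennreal[OF e ne supeq]) simp
  then obtain K where K: "K \<subseteq> A" "compact K"
    and lt: "emeasure lborel A < emeasure lborel K + ennreal e" by blast
  have Ks[measurable]: "K \<in> sets borel" using K by (simp add: compact_imp_closed)
  have "emeasure lborel A = emeasure lborel K + emeasure lborel (A - K)"
    using K by (subst plus_emeasure) (auto simp: Un_absorb1 Ks)
  with lt have "emeasure lborel K + emeasure lborel (A - K) < emeasure lborel K + ennreal e" by simp
  moreover have "emeasure lborel K < \<infinity>" using K(2) by (rule emeasure_compact_finite)
  ultimately have "emeasure lborel (A - K) < ennreal e"
    by (simp add: ennreal_add_left_cancel_less)
  with K that show ?thesis by blast
qed

lemma indicator_translate_cont:
  fixes A :: "'a::euclidean_space set"
  assumes A[measurable]: "A \<in> sets borel" and fin: "emeasure lborel A < \<infinity>"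
  shows "((\<lambda>h. \<integral>\<^sup>+x. ennreal ((indicator A (x + h) - indicator A x)^2) \<partial>lborel) \<longlongrightarrow> 0) (at 0)"
proof (rule ennreal_tendsto_0I)
  fix e :: real assume e: "e > 0"
  obtain K where K: "compact K" "K \<subseteq> A" and AK: "emeasure lborel (A - K) < ennreal (e/4)"
    using inner_compact_approx[OF A fin, of "e/4"] e by auto
  obtain U where U: "open U" "A \<subseteq> U" and UA: "emeasure lborel (U - A) < ennreal (e/4)"
    using outer_regular_lborel[OF A, of "e/4"] e by auto
  obtain d where d: "d > 0" "(\<Union>x\<in>K. ball x d) \<subseteq> U"
    using compact_subset_open_imp_ball_epsilon_subset[OF K(1) U(1)] K(2) U(2) by blast
  have Ks[measurable]: "K \<in> sets borel" using K by (simp add: compact_imp_closed)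
  have Us[measurable]: "U \<in> sets borel" using U by simp
  show "eventually (\<lambda>h. (\<integral>\<^sup>+x. ennreal ((indicator A (x + h) - indicator A x)^2) \<partial>lborel) \<le> ennreal e) (at 0)"
  proof -
  have "((\<lambda>h::'a. norm h) \<longlongrightarrow> 0) (at 0)" by (intro tendsto_norm_zero tendsto_ident_at)
  from order_tendstoD(2)[OF this d(1)] show ?thesis
  proof (rule eventually_mono)
    fix h :: 'a assume h: "norm h < d"
    have KU1: "x + h \<in> U" if "x \<in> K" for x
      using d(2) that h by (force simp: dist_norm)
    have KU2: "x \<in> U" if "x + h \<in> K" for x
    proof -
      have "x \<in> ball (x + h) d" using h by (simp add: dist_norm)
      then show ?thesis using d(2) that by blast
    qed
    have pw: "ennreal ((indicator A (x + h) - indicator A x)^2) \<le>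
        indicator (A - K) (x + h) + indicator (U - A) x + (indicator (A - K) x + indicator (U - A) (x + h))" for x
      using KU1[of x] KU2[of x] K(2) U(2) by (auto simp: indicator_def)
    have "(\<integral>\<^sup>+x. ennreal ((indicator A (x + h) - indicator A x)^2) \<partial>lborel) \<le>
        (\<integral>\<^sup>+x. indicator (A - K) (x + h) + indicator (U - A) x + (indicator (A - K) x + indicator (U - A) (x + h)) \<partial>lborel)"
      by (intro nn_integral_mono pw)
    also have "\<dots> = (\<integral>\<^sup>+x. indicator (A - K) (x + h) \<partial>lborel) + (\<integral>\<^sup>+x. indicator (U - A) x \<partial>lborel)
       + ((\<integral>\<^sup>+x. indicator (A - K) x \<partial>lborel) + (\<integral>\<^sup>+x. indicator (U - A) (x + h) \<partial>lborel))"
      by (simp add: nn_integral_add)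
    also have "\<dots> = emeasure lborel (A - K) + emeasure lborel (U - A) + (emeasure lborel (A - K) + emeasure lborel (U - A))"
      by (simp add: nn_integral_translate[where F="indicator (A - K)"] nn_integral_translate[where F="indicator (U - A)"])
    also have "\<dots> \<le> ennreal (e/4) + ennreal (e/4) + (ennreal (e/4) + ennreal (e/4))"
      using AK UA by (intro add_mono) auto
    also have "\<dots> = ennreal e" using e by (simp flip: ennreal_plus)
    finally show "(\<integral>\<^sup>+x. ennreal ((indicator A (x + h) - indicator A x)^2) \<partial>lborel) \<le> ennreal e" .
  qed
  qed
qed

lemma sum_sq_le_card: "(\<Sum>i\<in>I. a i)^2 \<le> real (card I) * (\<Sum>i\<in>I. (a i)^2)"
  using Cauchy_Schwarz_ineq_sum[of a "\<lambda>_. 1" I] by (simp add: mult.commute)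

lemma simple_translate_cont:
  fixes s :: "'a::euclidean_space \<Rightarrow> real"
  assumes s: "simple_function lborel s" and fin: "(\<integral>\<^sup>+x. ennreal ((s x)^2) \<partial>lborel) < \<infinity>"
  shows "((\<lambda>h. \<integral>\<^sup>+x. ennreal ((s (x + h) - s x)^2) \<partial>lborel) \<longlongrightarrow> 0) (at 0)"
proof -
  define R where "R = s ` UNIV - {0}"
  define A where "A c = s -` {c}" for c
  have finR: "finite R" using simple_functionD(1)[OF s] unfolding R_def by simp
  have As[measurable]: "A c \<in> sets borel" for c
    using simple_functionD(2)[OF s, of "{c}"] unfolding A_def by simp
  have Afin: "emeasure lborel (A c) < \<infinity>" if c: "c \<in> R" for c
  proof -
    have c0: "c \<noteq> 0" using c by (simp add: R_def)
    have "ennreal (c^2) * emeasure lborel (A c) = (\<integral>\<^sup>+x. ennreal (c^2) * indicator (A c) x \<partial>lborel)"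
      by (rule nn_integral_cmult_indicator[symmetric]) simp
    also have "\<dots> \<le> (\<integral>\<^sup>+x. ennreal ((s x)^2) \<partial>lborel)"
      by (intro nn_integral_mono) (auto simp: A_def indicator_def)
    finally have "ennreal (c^2) * emeasure lborel (A c) < \<infinity>" using fin by simp
    with c0 show ?thesis by (auto simp: ennreal_mult_less_top)
  qed
  have rep: "s x = (\<Sum>c\<in>R. c * indicator (A c) x)" for x
  proof (cases "s x = 0")
    case True
    have "(\<Sum>c\<in>R. c * indicator (A c) x) = 0"
      using True by (intro sum.neutral) (auto simp: R_def A_def indicator_def)
    with True show ?thesis by simp
  next
    case False
    then have "s x \<in> R" by (simp add: R_def)
    then have "(\<Sum>c\<in>R. c * indicator (A c) x) = s x * indicator (A (s x)) x"
      by (intro sum.remove[THEN trans]) (auto simp: finR A_def indicator_def intro!: sum.neutral)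
    then show ?thesis by (simp add: A_def)
  qed
  define G where "G c h = (\<integral>\<^sup>+x. ennreal ((indicator (A c) (x + h) - indicator (A c) x)^2) \<partial>lborel)" for c h
  have pw: "ennreal ((s (x + h) - s x)^2) \<le>
      ennreal (real (card R)) * (\<Sum>c\<in>R. ennreal (c^2) * ennreal ((indicator (A c) (x + h) - indicator (A c) x)^2))" for x h
  proof -
    have "(s (x + h) - s x)^2 = (\<Sum>c\<in>R. c * (indicator (A c) (x + h) - indicator (A c) x))^2"
      unfolding rep by (simp add: sum_subtractf[symmetric] right_diff_distrib)
    also have "\<dots> \<le> real (card R) * (\<Sum>c\<in>R. (c * (indicator (A c) (x + h) - indicator (A c) x))^2)"
      by (rule sum_sq_le_card)
    finally have X: "(s (x + h) - s x)^2 \<le> real (card R) * (\<Sum>c\<in>R. c^2 * (indicator (A c) (x + h) - indicator (A c) x)^2)"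
      by (simp add: power_mult_distrib)
    have "ennreal ((s (x + h) - s x)^2) \<le> ennreal (real (card R) * (\<Sum>c\<in>R. c^2 * (indicator (A c) (x + h) - indicator (A c) x)^2))"
      using X by (rule ennreal_leI)
    also have "\<dots> = ennreal (real (card R)) * ennreal (\<Sum>c\<in>R. c^2 * (indicator (A c) (x + h) - indicator (A c) x)^2)"
      by (rule ennreal_mult) (auto intro: sum_nonneg)
    also have "ennreal (\<Sum>c\<in>R. c^2 * (indicator (A c) (x + h) - indicator (A c) x)^2) =
        (\<Sum>c\<in>R. ennreal (c^2) * ennreal ((indicator (A c) (x + h) - indicator (A c) x)^2))"
      by (subst sum_ennreal[symmetric]) (auto simp: ennreal_mult)
    finally show ?thesis .
  qed
  have bound: "(\<integral>\<^sup>+x. ennreal ((s (x + h) - s x)^2) \<partial>lborel) \<le> ennreal (real (card R)) * (\<Sum>c\<in>R. ennreal (c^2) * G c h)" for h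
  proof -
    have "(\<integral>\<^sup>+x. ennreal ((s (x + h) - s x)^2) \<partial>lborel) \<le>
      (\<integral>\<^sup>+x. ennreal (real (card R)) * (\<Sum>c\<in>R. ennreal (c^2) * ennreal ((indicator (A c) (x + h) - indicator (A c) x)^2)) \<partial>lborel)"
      by (intro nn_integral_mono pw)
    also have "\<dots> = ennreal (real (card R)) * (\<Sum>c\<in>R. ennreal (c^2) * G c h)"
      unfolding G_def by (simp add: nn_integral_cmult nn_integral_sum)
    finally show ?thesis .
  qed
  have lim: "((\<lambda>h. ennreal (real (card R)) * (\<Sum>c\<in>R. ennreal (c^2) * G c h)) \<longlongrightarrow> 0) (at 0)"
  proof -
    have "((\<lambda>h. ennreal (real (card R)) * (\<Sum>c\<in>R. ennreal (c^2) * G c h)) \<longlongrightarrow>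
        ennreal (real (card R)) * (\<Sum>c\<in>R. ennreal (c^2) * 0)) (at 0)"
      unfolding G_def
      by (intro ennreal_tendsto_cmult tendsto_sum indicator_translate_cont Afin) auto
    then show ?thesis by simp
  qed
  show ?thesis
    by (rule tendsto_sandwich[OF _ _ tendsto_const lim]) (auto intro!: always_eventually bound)
qed

lemma sq3: "((a::real) + b + c)^2 \<le> 3 * (a^2 + b^2 + c^2)"
proof -
  have "0 \<le> (a - b)^2 + (b - c)^2 + (a - c)^2" by simp
  then show ?thesis by (simp add: power2_eq_square algebra_simps)
qed

lemma ennreal_3mult: "0 \<le> a \<Longrightarrow> ennreal (3 * a) = 3 * ennreal a"
  by (subst ennreal_mult) auto

lemma ennreal_3sum: "0 \<le> a \<Longrightarrow> 0 \<le> b \<Longrightarrow> 0 \<le> c \<Longrightarrow>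
   ennreal (3 * a + 3 * b + 3 * c) = 3 * ennreal a + 3 * ennreal b + 3 * ennreal c"
  by (simp add: ennreal_plus ennreal_mult)

lemma L2_translate_cont:
  fixes f :: "'a::euclidean_space \<Rightarrow> real"
  assumes f[measurable]: "f \<in> borel_measurable borel" and fin: "(\<integral>\<^sup>+x. ennreal ((f x)^2) \<partial>lborel) < \<infinity>"
  shows "((\<lambda>h. \<integral>\<^sup>+x. ennreal ((f (x + h) - f x)^2) \<partial>lborel) \<longlongrightarrow> 0) (at 0)"
proof -
  have "f \<in> borel_measurable lborel" by simp
  from borel_measurable_implies_sequence_metric[OF this, of 0] obtain F where
    Fs: "\<And>i. simple_function lborel (F i)" and Fl: "\<And>x. (\<lambda>i. F i x) \<longlonglongrightarrow> f x"
    and Fb: "\<And>i x. dist (F i x) 0 \<le> 2 * dist (f x) 0" by auto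
  have Fm[measurable]: "F i \<in> borel_measurable borel" for i
    using borel_measurable_simple_function[OF Fs[of i]] by simp
  have Fb': "\<bar>F i x\<bar> \<le> 2 * \<bar>f x\<bar>" for i x using Fb[of i x] by simp
  have conv: "(\<lambda>i. \<integral>\<^sup>+x. ennreal ((f x - F i x)^2) \<partial>lborel) \<longlonglongrightarrow> (\<integral>\<^sup>+x. 0 \<partial>(lborel :: 'a measure))"
  proof (rule nn_integral_dominated_convergence[of "\<lambda>i x. ennreal ((f x - F i x)^2)" lborel "\<lambda>x. 0" "\<lambda>x. 9 * ennreal ((f x)^2)"])
    show "AE x in lborel. ennreal ((f x - F j x)^2) \<le> 9 * ennreal ((f x)^2)" for j
    proof (intro AE_I2)
      fix x
      have "\<bar>f x - F j x\<bar> \<le> 3 * \<bar>f x\<bar>" using Fb'[of j x] by linarith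
      then have "(f x - F j x)^2 \<le> (3 * \<bar>f x\<bar>)^2"
        by (metis abs_ge_zero power2_abs power_mono)
      then have "(f x - F j x)^2 \<le> 9 * (f x)^2" by (simp add: power_mult_distrib)
      then have "ennreal ((f x - F j x)^2) \<le> ennreal (9 * (f x)^2)" by (rule ennreal_leI)
      then show "ennreal ((f x - F j x)^2) \<le> 9 * ennreal ((f x)^2)" by (simp add: ennreal_mult)
    qed
    show "(\<integral>\<^sup>+x. 9 * ennreal ((f x)^2) \<partial>lborel) < \<infinity>"
      using fin by (simp add: nn_integral_cmult ennreal_mult_less_top)
    show "AE x in lborel. (\<lambda>i. ennreal ((f x - F i x)^2)) \<longlonglongrightarrow> 0"
    proof (intro AE_I2)
      fix x
      have "(\<lambda>i. (f x - F i x)^2) \<longlonglongrightarrow> (f x - f x)^2"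
        by (intro tendsto_intros Fl)
      then have "(\<lambda>i. ennreal ((f x - F i x)^2)) \<longlonglongrightarrow> ennreal 0"
        by (intro tendsto_ennrealI) simp
      then show "(\<lambda>i. ennreal ((f x - F i x)^2)) \<longlonglongrightarrow> 0" by simp
    qed
  qed auto
  then have conv0: "(\<lambda>i. \<integral>\<^sup>+x. ennreal ((f x - F i x)^2) \<partial>lborel) \<longlonglongrightarrow> 0" by simp
  show ?thesis
  proof (rule ennreal_tendsto_0I)
    fix e :: real assume e: "e > 0"
    have e9: "ennreal (e/9) > 0" using e by simp
    from order_tendstoD(2)[OF conv0 e9] obtain i where
      i: "(\<integral>\<^sup>+x. ennreal ((f x - F i x)^2) \<partial>lborel) < ennreal (e/9)"
      by (auto simp: eventually_sequentially)
    define s where "s = F i"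
    have sm[measurable]: "s \<in> borel_measurable borel" unfolding s_def by simp
    have sfin: "(\<integral>\<^sup>+x. ennreal ((s x)^2) \<partial>lborel) < \<infinity>"
    proof -
      have "(\<integral>\<^sup>+x. ennreal ((s x)^2) \<partial>lborel) \<le> (\<integral>\<^sup>+x. 4 * ennreal ((f x)^2) \<partial>lborel)"
      proof (intro nn_integral_mono)
        fix x
        have "(s x)^2 \<le> (2 * \<bar>f x\<bar>)^2" unfolding s_def
          by (metis Fb' abs_ge_zero power2_abs power_mono)
        then have "ennreal ((s x)^2) \<le> ennreal (4 * (f x)^2)" by (intro ennreal_leI) (simp add: power_mult_distrib)
        then show "ennreal ((s x)^2) \<le> 4 * ennreal ((f x)^2)" by (simp add: ennreal_mult)
      qed
      also have "\<dots> < \<infinity>" using fin by (simp add: nn_integral_cmult ennreal_mult_less_top)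
      finally show ?thesis .
    qed
    have st: "((\<lambda>h. \<integral>\<^sup>+x. ennreal ((s (x + h) - s x)^2) \<partial>lborel) \<longlongrightarrow> 0) (at 0)"
      by (rule simple_translate_cont[OF _ sfin]) (simp add: s_def Fs)
    from order_tendstoD(2)[OF st e9] show "eventually (\<lambda>h. (\<integral>\<^sup>+x. ennreal ((f (x + h) - f x)^2) \<partial>lborel) \<le> ennreal e) (at 0)"
    proof (rule eventually_mono)
      fix h assume h: "(\<integral>\<^sup>+x. ennreal ((s (x + h) - s x)^2) \<partial>lborel) < ennreal (e/9)"
      have i': "(\<integral>\<^sup>+x. ennreal ((f x - s x)^2) \<partial>lborel) < ennreal (e/9)" using i by (simp add: s_def)
      have "(\<integral>\<^sup>+x. ennreal ((f (x + h) - f x)^2) \<partial>lborel) \<le>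
          (\<integral>\<^sup>+x. 3 * ennreal ((f (x + h) - s (x + h))^2) + 3 * ennreal ((s (x + h) - s x)^2) + 3 * ennreal ((f x - s x)^2) \<partial>lborel)"
      proof (intro nn_integral_mono)
        fix x
        have "(f (x + h) - f x)^2 \<le> 3 * ((f (x + h) - s (x + h))^2 + (s (x + h) - s x)^2 + (s x - f x)^2)"
          using sq3[of "f (x + h) - s (x + h)" "s (x + h) - s x" "s x - f x"] by simp
        also have "(s x - f x)^2 = (f x - s x)^2" by (simp add: power2_commute)
        finally have "ennreal ((f (x + h) - f x)^2) \<le> ennreal (3 * ((f (x + h) - s (x + h))^2 + (s (x + h) - s x)^2 + (f x - s x)^2))"
          by (rule ennreal_leI)
        then show "ennreal ((f (x + h) - f x)^2) \<le> 3 * ennreal ((f (x + h) - s (x + h))^2) + 3 * ennreal ((s (x + h) - s x)^2) + 3 * ennreal ((f x - s x)^2)"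
          by (simp only: ennreal_3sum distrib_left ennreal_3mult zero_le_power2)
      qed
      also have "\<dots> = 3 * (\<integral>\<^sup>+x. ennreal ((f (x + h) - s (x + h))^2) \<partial>lborel) + 3 * (\<integral>\<^sup>+x. ennreal ((s (x + h) - s x)^2) \<partial>lborel)
          + 3 * (\<integral>\<^sup>+x. ennreal ((f x - s x)^2) \<partial>lborel)"
        by (simp add: nn_integral_add nn_integral_cmult)
      also have "(\<integral>\<^sup>+x. ennreal ((f (x + h) - s (x + h))^2) \<partial>lborel) = (\<integral>\<^sup>+x. ennreal ((f x - s x)^2) \<partial>lborel)"
        by (rule nn_integral_translate[where F="\<lambda>x. ennreal ((f x - s x)^2)"]) simp
      also have "3 * (\<integral>\<^sup>+x. ennreal ((f x - s x)^2) \<partial>lborel) + 3 * (\<integral>\<^sup>+x. ennreal ((s (x + h) - s x)^2) \<partial>lborel)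
          + 3 * (\<integral>\<^sup>+x. ennreal ((f x - s x)^2) \<partial>lborel) \<le> 3 * ennreal (e/9) + 3 * ennreal (e/9) + 3 * ennreal (e/9)"
        using i' h by (intro add_mono mult_left_mono) auto
      also have "\<dots> = ennreal e"
        using e by (subst ennreal_3sum[symmetric]) auto
      finally show "(\<integral>\<^sup>+x. ennreal ((f (x + h) - f x)^2) \<partial>lborel) \<le> ennreal e" .
    qed
  qed
qed

lemma ennreal_tail_tendsto:
  fixes a :: "nat \<Rightarrow> ennreal"
  assumes fin: "(\<Sum>j. a j) < \<infinity>"
  shows "(\<lambda>J. \<Sum>j. a j * indicator {J..} j) \<longlonglongrightarrow> 0"
proof -
  have eq: "(\<Sum>j. b j) = (\<integral>\<^sup>+j. b j \<partial>count_space UNIV)" for b :: "nat \<Rightarrow> ennreal"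
    by (simp add: nn_integral_count_space_nat)
  have "(\<lambda>J. \<integral>\<^sup>+j. a j * indicator {J..} j \<partial>count_space UNIV) \<longlonglongrightarrow> (\<integral>\<^sup>+j. 0 \<partial>(count_space (UNIV :: nat set)))"
  proof (rule nn_integral_dominated_convergence[of "\<lambda>J j. a j * indicator {J..} j" "count_space UNIV" "\<lambda>j. 0" a])
    show "(\<integral>\<^sup>+j. a j \<partial>count_space UNIV) < \<infinity>" using fin by (simp add: eq)
    show "AE j in count_space UNIV. a j * indicator {J..} j \<le> a j" for J
      by (intro AE_I2) (auto simp: indicator_def)
    show "AE j in count_space UNIV. (\<lambda>J. a j * indicator {J..} j) \<longlonglongrightarrow> 0"
    proof (intro AE_I2)
      fix j :: nat
      have "eventually (\<lambda>J. a j * indicator {J..} j = 0) sequentially"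
        using eventually_gt_at_top[of j] by (rule eventually_mono) (auto simp: indicator_def)
      then show "(\<lambda>J. a j * indicator {J..} j) \<longlonglongrightarrow> 0" by (rule tendsto_eventually)
    qed
  qed auto
  then show ?thesis by (simp add: eq)
qed

lemma le_sqrt2_mult: "(x::ennreal) \<le> ennreal (sqrt 2) * x"
proof -
  have "1 \<le> ennreal (sqrt 2)" using ennreal_leI[of 1 "sqrt 2"] by simp
  then have "1 * x \<le> ennreal (sqrt 2) * x" by (rule mult_right_mono) simp
  then show ?thesis by simp
qed

lemma Be_translate_cont:
  fixes f :: "'a::euclidean_space \<Rightarrow> real"
  assumes f[measurable]: "f \<in> borel_measurable borel" and fin: "Be (\<lambda>x. ennreal \<bar>f x\<bar>) < \<infinity>"
  shows "((\<lambda>h. Be (\<lambda>x. ennreal \<bar>f (x + h) - f x\<bar>)) \<longlongrightarrow> 0) (at 0)"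
proof (rule ennreal_tendsto_0I)
  fix e :: real assume e: "e > 0"
  define g where "g x = ennreal \<bar>f x\<bar>" for x
  have g[measurable]: "g \<in> borel_measurable borel" unfolding g_def by measurable
  define L where "L k = L2e g (dyadic_shell k)" for k
  define c where "c k = ennreal (sqrt 2 ^ k)" for k
  define T where "T J = (\<Sum>j. c j * L j * indicator {J..} j)" for J
  have BeL: "Be g = (\<Sum>j. c j * L j)" unfolding Be_def' c_def L_def ..
  have fin': "Be g < \<infinity>" using fin unfolding g_def .
  have c1: "1 \<le> c k" for k unfolding c_def by (simp add: one_le_power)
  have cS: "c (Suc k) = ennreal (sqrt 2) * c k" for k
    unfolding c_def by (simp add: ennreal_mult)
  have Lfin: "L k < \<infinity>" for k
  proof -
    have "L k \<le> c k * L k" using c1[of k] by (metis mult_1 mult_right_mono zero_le)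
    also have "\<dots> \<le> Be g" unfolding BeL by (rule ennreal_term_le_suminf)
    finally show ?thesis using fin' by simp
  qed
  have "T \<longlonglongrightarrow> 0" unfolding T_def using fin' unfolding BeL by (rule ennreal_tail_tendsto)
  from order_tendstoD(2)[OF this, of "ennreal (e / 10)"] e
  obtain J0 where J0: "\<And>J. J \<ge> J0 \<Longrightarrow> T J < ennreal (e / 10)" by (auto simp: eventually_sequentially)
  define J where "J = Suc J0"
  have TJ: "T J < ennreal (e / 10)" "T (Suc J) < ennreal (e/10)" using J0 unfolding J_def by auto
  have J1: "J \<ge> 1" unfolding J_def by simp
  define R where "R = (2::real) ^ J + 1"
  define F where "F x = f x * indicator (cball 0 R) x" for x
  have cb[measurable]: "cball (0::'a) r \<in> sets borel" for r by simp
  have Fm[measurable]: "F \<in> borel_measurable borel" unfolding F_def by measurable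
  have Ffin: "(\<integral>\<^sup>+x. ennreal ((F x)^2) \<partial>lborel) < \<infinity>"
  proof -
    have "(\<integral>\<^sup>+x. ennreal ((F x)^2) \<partial>lborel) = (\<integral>\<^sup>+x. g x ^ 2 * indicator (cball 0 R) x \<partial>lborel)"
      unfolding F_def g_def by (intro nn_integral_cong) (auto simp: indicator_def ennreal_power)
    also have "\<dots> = (L2e g (cball 0 R))^2" unfolding L2e_def by simp
    also have "L2e g (cball 0 R) \<le> L2e g (cball 0 (2 ^ Suc J))"
      unfolding R_def by (intro L2e_mono_set subset_cball) (simp add: one_le_power)
    also have "\<dots> \<le> L2e g (\<Union>k\<in>{..Suc J}. dyadic_shell k)"
      by (intro L2e_mono_set cball_sub_shells)
    also have "\<dots> \<le> (\<Sum>k\<in>{..Suc J}. L k)" unfolding L_def by (intro L2e_UN) auto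
    finally have "(\<integral>\<^sup>+x. ennreal ((F x)^2) \<partial>lborel) \<le> (\<Sum>k\<in>{..Suc J}. L k)^2"
      by (simp add: power_mono_ennreal)
    also have "\<dots> < \<infinity>" using Lfin by (simp add: power_less_top_ennreal)
    finally show ?thesis .
  qed
  define CJ where "CJ = (\<Sum>j<Suc J. sqrt 2 ^ j)"
  have CJ: "CJ > 0" unfolding CJ_def by (intro sum_pos) auto
  define d where "d = e / (2 * CJ)"
  have d: "d > 0" using e CJ by (simp add: d_def)
  have ev1: "eventually (\<lambda>h. (\<integral>\<^sup>+x. ennreal ((F (x + h) - F x)^2) \<partial>lborel) < ennreal (d^2)) (at 0)"
    using order_tendstoD(2)[OF L2_translate_cont[OF Fm Ffin], of "ennreal (d^2)"] d by simp
  have ev2: "eventually (\<lambda>h::'a. norm h < 1) (at 0)"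
  proof -
    have "((\<lambda>h::'a. norm h) \<longlongrightarrow> 0) (at 0)" by (intro tendsto_norm_zero tendsto_ident_at)
    from order_tendstoD(2)[OF this] show ?thesis by simp
  qed
  show "eventually (\<lambda>h. Be (\<lambda>x. ennreal \<bar>f (x + h) - f x\<bar>) \<le> ennreal e) (at 0)"
    using ev1 ev2
  proof eventually_elim
    case (elim h)
    define u where "u x = ennreal \<bar>f (x + h) - f x\<bar>" for x
    have um[measurable]: "u \<in> borel_measurable borel" unfolding u_def by measurable
    define Q where "Q = L2e u (cball 0 (2 ^ J))"
    have Q: "Q \<le> ennreal d"
    proof -
      have "Q \<le> L2e (\<lambda>x. ennreal \<bar>F (x + h) - F x\<bar>) UNIV"
        unfolding Q_def L2e_def
      proof (intro esq_mono nn_integral_mono)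
        fix x
        show "u x ^ 2 * indicator (cball 0 (2 ^ J)) x \<le> ennreal \<bar>F (x + h) - F x\<bar> ^ 2 * indicator UNIV x"
        proof (cases "x \<in> cball 0 (2 ^ J)")
          case True
          then have "norm x \<le> 2 ^ J" by simp
          then have "norm (x + h) \<le> R" "norm x \<le> R" using elim(2) norm_triangle_ineq[of x h]
            unfolding R_def by linarith+
          then have "F (x + h) = f (x + h)" "F x = f x" unfolding F_def by (auto simp: indicator_def)
          then show ?thesis by (simp add: u_def indicator_def)
        qed simp
      qed
      also have "\<dots> = esq (\<integral>\<^sup>+x. ennreal ((F (x + h) - F x)^2) \<partial>lborel)"
        unfolding L2e_def by (intro arg_cong[where f=esq] nn_integral_cong) (simp add: ennreal_power)
      also have "\<dots> \<le> esq (ennreal (d^2))" using elim(1) by (intro esq_mono) simp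
      also have "\<dots> = ennreal d" using d by (simp add: esq_def)
      finally show ?thesis .
    qed
    have hb: "norm h \<le> 2 ^ 0" using elim(2) by simp
    have tb: "L2e u (dyadic_shell j) \<le> (if j \<le> J then Q else 0) + indicator {Suc J..} j * (L (j - 1) + L j + L (Suc j) + L j)" for j
    proof (cases "j \<le> J")
      case True
      have "L2e u (dyadic_shell j) \<le> Q" unfolding Q_def
      proof (intro L2e_mono_set subsetI)
        fix x assume "x \<in> dyadic_shell j"
        then have "norm x \<le> 2 ^ j" by (rule dyadic_shell_le)
        also have "\<dots> \<le> 2 ^ J" using True by (intro power_increasing) auto
        finally show "x \<in> cball 0 (2 ^ J)" by simp
      qed
      then show ?thesis using True by (simp add: add_increasing2)
    next
      case False
      have "L2e u (dyadic_shell j) \<le> L2e (\<lambda>x. g (x + h) + g x) (dyadic_shell j)"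
        unfolding u_def g_def by (intro L2e_mono) (simp add: ennreal_plus[symmetric] del: ennreal_plus)
      also have "\<dots> \<le> L2e (\<lambda>x. g (x + h)) (dyadic_shell j) + L j"
        unfolding L_def by (intro L2e_add) auto
      also have "L2e (\<lambda>x. g (x + h)) (dyadic_shell j) \<le> L2e g (dyadic_shell (j - 1) \<union> dyadic_shell j \<union> dyadic_shell (Suc j))"
        using False J1 by (intro L2e_translate_le shell_translate_big[OF _ _ hb]) auto
      also have "\<dots> \<le> L2e g (dyadic_shell (j - 1) \<union> dyadic_shell j) + L (Suc j)"
        unfolding L_def by (intro L2e_Un g dyadic_shell_sets sets.Un)
      also have "\<dots> \<le> (L (j - 1) + L j) + L (Suc j)"
        unfolding L_def by (intro add_right_mono L2e_Un g dyadic_shell_sets)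
      finally show ?thesis using False by (simp add: add_increasing)
    qed
    have "Be u \<le> (\<Sum>j. c j * ((if j \<le> J then Q else 0) + indicator {Suc J..} j * (L (j - 1) + L j + L (Suc j) + L j)))"
      unfolding Be_def' c_def[symmetric] by (intro suminf_le mult_left_mono tb) (auto simp: summableI)
    also have "\<dots> = (\<Sum>j. c j * (if j \<le> J then Q else 0)) +
        ((\<Sum>j. c j * L (j - 1) * indicator {Suc J..} j) + (\<Sum>j. c j * L j * indicator {Suc J..} j)
         + (\<Sum>j. c j * L (Suc j) * indicator {Suc J..} j) + (\<Sum>j. c j * L j * indicator {Suc J..} j))"
      by (simp add: distrib_left distrib_right suminf_add[symmetric] summableI algebra_simps)
    also have "(\<Sum>j. c j * (if j \<le> J then Q else 0)) = (\<Sum>j<Suc J. c j * (if j \<le> J then Q else 0))"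
      by (rule suminf_finite) auto
    also have "\<dots> = (\<Sum>j<Suc J. c j) * Q"
      unfolding sum_distrib_right by (intro sum.cong) auto
    also have "(\<Sum>j<Suc J. c j) = ennreal CJ"
      unfolding c_def CJ_def by (rule sum_ennreal) auto
    also have "ennreal CJ * Q \<le> ennreal CJ * ennreal d" using Q by (intro mult_left_mono) auto
    also have "ennreal CJ * ennreal d = ennreal (e / 2)"
      using CJ e unfolding d_def by (subst ennreal_mult[symmetric]) auto
    also have "(\<Sum>j. c j * L (j - 1) * indicator {Suc J..} j) = ennreal (sqrt 2) * T J"
    proof -
      have "(\<Sum>j. c j * L (j - 1) * indicator {Suc J..} j) = 0 + (\<Sum>j. c (Suc j) * L j * indicator {Suc J..} (Suc j))"
        using ennreal_suminf_Suc[of "\<lambda>j. c j * L (j - 1) * indicator {Suc J..} j"] by simp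
      also have "\<dots> = ennreal (sqrt 2) * T J"
        unfolding T_def cS by (simp add: mult.assoc indicator_def)
      finally show ?thesis .
    qed
    also have Tle: "(\<Sum>j. c j * L j * indicator {Suc J..} j) \<le> T J"
      unfolding T_def by (intro suminf_le) (auto simp: indicator_def summableI)
    also have "(\<Sum>j. c j * L (Suc j) * indicator {Suc J..} j) \<le> T J"
    proof -
      have "(\<Sum>j. c j * L (Suc j) * indicator {Suc J..} j) \<le> (\<Sum>j. c (Suc j) * L (Suc j) * indicator {Suc J..} (Suc j))"
        unfolding cS
        by (intro suminf_le) (auto simp: summableI indicator_def mult.assoc intro: le_sqrt2_mult)
      also have "\<dots> \<le> c 0 * L 0 * indicator {Suc J..} 0 + (\<Sum>j. c (Suc j) * L (Suc j) * indicator {Suc J..} (Suc j))"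
        by (simp add: add_increasing)
      also have "\<dots> = (\<Sum>j. c j * L j * indicator {Suc J..} j)"
        by (rule ennreal_suminf_Suc)
      also have "\<dots> \<le> T J"
        unfolding T_def by (intro suminf_le) (auto simp: indicator_def summableI)
      finally show ?thesis .
    qed
    also have "ennreal (e / 2) + (ennreal (sqrt 2) * T J + T J + T J + T J) \<le> ennreal (e / 2) + (2 * ennreal (e/10) + ennreal (e/10) + ennreal (e/10) + ennreal (e/10))"
    proof (intro add_mono order.refl)
      have "ennreal (sqrt 2) \<le> 2"
        using ennreal_leI[of "sqrt 2" 2] by (simp add: real_sqrt_le_iff[of 2 4, simplified])
      then show "ennreal (sqrt 2) * T J \<le> 2 * ennreal (e/10)"
        using TJ(1) by (intro mult_mono) auto
    qed (use TJ(1) in auto)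
    also have "\<dots> \<le> ennreal e"
    proof -
      have t5: "ennreal (e/5) = ennreal 2 * ennreal (e/10)" using e by (subst ennreal_mult[symmetric]) auto
      have "ennreal (e / 2) + (2 * ennreal (e/10) + ennreal (e/10) + ennreal (e/10) + ennreal (e/10))
         = ennreal (e / 2) + (ennreal (e/5) + ennreal (e/10) + ennreal (e/10) + ennreal (e/10))"
        using t5 by simp
      also have "\<dots> = ennreal (e/2 + (e/5 + e/10 + e/10 + e/10))"
        using e by (simp del: ennreal_plus add: ennreal_plus[symmetric])
      also have "\<dots> \<le> ennreal e" by (intro ennreal_leI) simp
      finally show ?thesis .
    qed
    finally show ?case unfolding u_def by (auto intro!: add_mono)
  qed
qed

lemma Be_mono: "(\<And>x. g x \<le> g' x) \<Longrightarrow> Be g \<le> Be g'"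
  unfolding Be_def by (intro suminf_le mult_left_mono L2e_mono) (auto simp: summableI)

lemma Be_cmult:
  assumes [measurable]: "g \<in> borel_measurable borel"
  shows "Be (\<lambda>x. c * g x) = c * Be g"
  unfolding Be_def by (simp add: L2e_cmult mult.left_commute)

lemma Be_add:
  assumes [measurable]: "g1 \<in> borel_measurable borel" "g2 \<in> borel_measurable borel"
  shows "Be (\<lambda>x. g1 x + g2 x) \<le> Be g1 + Be g2"
proof -
  have "Be (\<lambda>x. g1 x + g2 x) \<le> (\<Sum>j. ennreal (2 powr (real j / 2)) * L2e g1 (dyadic_shell j) + ennreal (2 powr (real j / 2)) * L2e g2 (dyadic_shell j))"
    unfolding Be_def distrib_left[symmetric] by (intro suminf_le mult_left_mono L2e_add) (auto simp: summableI)
  also have "\<dots> = Be g1 + Be g2" unfolding Be_def by (simp add: suminf_add summableI)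
  finally show ?thesis .
qed

lemma exists_p: "\<exists>p. norm h \<le> 2 ^ p \<and> sqrt 2 ^ p \<le> 2 * (1 + sqrt (norm h))"
proof -
  obtain n where n: "norm h < 2 ^ n" using real_arch_pow[of 2 "norm h"] by auto
  define p where "p = (LEAST p. norm h \<le> 2 ^ p)"
  have P: "norm h \<le> 2 ^ p" unfolding p_def by (rule LeastI[of _ n]) (use n in simp)
  have "sqrt 2 ^ p \<le> 2 * (1 + sqrt (norm h))"
  proof (cases p)
    case 0
    then show ?thesis by simp
  next
    case (Suc q)
    have "\<not> norm h \<le> 2 ^ q" using not_less_Least[of q "\<lambda>p. norm h \<le> 2 ^ p"] Suc unfolding p_def by simp
    then have "2 ^ p < 2 * norm h" using Suc by simp
    then have "sqrt (2 ^ p) \<le> sqrt (2 * norm h)" by simp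
    also have "sqrt (2 * norm h) = sqrt 2 * sqrt (norm h)" by (simp add: real_sqrt_mult)
    also have "\<dots> \<le> 2 * sqrt (norm h)"
      by (intro mult_right_mono) (auto simp: real_sqrt_le_iff[of 2 4, simplified])
    finally show ?thesis by (simp add: real_sqrt_power)
  qed
  with P show ?thesis by blast
qed

lemma Be_translate':
  fixes g :: "'a::euclidean_space \<Rightarrow> ennreal"
  assumes g[measurable]: "g \<in> borel_measurable borel"
  shows "Be (\<lambda>x. g (x + h)) \<le> ennreal (21 + 16 * sqrt (norm h)) * Be g"
proof -
  obtain p where p: "norm h \<le> 2 ^ p" "sqrt 2 ^ p \<le> 2 * (1 + sqrt (norm h))" using exists_p by blast
  have "Be (\<lambda>x. g (x + h)) \<le> ennreal (8 * sqrt 2 ^ p + 5) * Be g" by (rule Be_translate[OF g p(1)])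
  also have "\<dots> \<le> ennreal (21 + 16 * sqrt (norm h)) * Be g"
    using p(2) by (intro mult_right_mono ennreal_leI) auto
  finally show ?thesis .
qed

definition Dtr :: "('a::euclidean_space \<Rightarrow> real) \<Rightarrow> 'a \<Rightarrow> ennreal" where
  "Dtr f h = Be (\<lambda>x. ennreal \<bar>f (x + h) - f x\<bar>)"

lemma Dtr_bound:
  assumes f[measurable]: "f \<in> borel_measurable borel"
  shows "Dtr f h \<le> ennreal (22 + 16 * sqrt (norm h)) * B_norm f"
proof -
  have "Dtr f h \<le> Be (\<lambda>x. ennreal \<bar>f (x + h)\<bar> + ennreal \<bar>f x\<bar>)"
    unfolding Dtr_def by (intro Be_mono) (simp add: ennreal_plus[symmetric] del: ennreal_plus)
  also have "\<dots> \<le> Be (\<lambda>x. ennreal \<bar>f (x + h)\<bar>) + Be (\<lambda>x. ennreal \<bar>f x\<bar>)"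
    by (rule Be_add) measurable
  also have "\<dots> \<le> ennreal (21 + 16 * sqrt (norm h)) * B_norm f + 1 * B_norm f"
    unfolding B_norm_eq
  proof (intro add_mono)
    show "Be (\<lambda>x. ennreal \<bar>f (x + h)\<bar>) \<le> ennreal (21 + 16 * sqrt (norm h)) * Be (\<lambda>x. ennreal \<bar>f x\<bar>)"
      by (rule Be_translate'[of "\<lambda>x. ennreal \<bar>f x\<bar>"]) measurable
  qed simp
  also have "\<dots> = ennreal (22 + 16 * sqrt (norm h)) * B_norm f"
  proof -
    have "ennreal (22 + 16 * sqrt (norm h)) = ennreal (21 + 16 * sqrt (norm h)) + ennreal 1"
      by (subst ennreal_plus[symmetric]) auto
    then show ?thesis by (simp only: distrib_right ennreal_1)
  qed
  finally show ?thesis .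
qed

lemma Dtr_0: "Dtr f 0 = 0"
  unfolding Dtr_def Be_def L2e_def by simp

lemma convol_cv:
  fixes \<phi> f :: "'a::euclidean_space \<Rightarrow> real"
  assumes \<phi>[measurable]: "\<phi> \<in> borel_measurable borel" and f[measurable]: "f \<in> borel_measurable borel" and e: "\<epsilon> > 0"
  shows "convol (mollify \<phi> \<epsilon>) f x = (\<integral>w. \<phi> w * f (x - \<epsilon> *\<^sub>R w) \<partial>lborel)"
proof -
  define G where "G y = mollify \<phi> \<epsilon> (x - y) * f y" for y
  have Gm[measurable]: "G \<in> borel_measurable borel" unfolding G_def mollify_def by measurable
  have c: "-\<epsilon> \<noteq> 0" using e by simp
  have eq: "lborel = density (distr lborel borel (\<lambda>w. x + (-\<epsilon>) *\<^sub>R w)) (\<lambda>_. \<bar>-\<epsilon>\<bar> ^ DIM('a))"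
    by (rule lborel_affine[OF c])
  have "convol (mollify \<phi> \<epsilon>) f x = integral\<^sup>L lborel G" unfolding convol_def G_def ..
  also have "\<dots> = integral\<^sup>L (density (distr lborel borel (\<lambda>w. x + (-\<epsilon>) *\<^sub>R w)) (\<lambda>_. \<bar>-\<epsilon>\<bar> ^ DIM('a))) G"
    by (rule arg_cong[where f="\<lambda>M. integral\<^sup>L M G", OF eq])
  also have "\<dots> = integral\<^sup>L (distr lborel borel (\<lambda>w. x + (-\<epsilon>) *\<^sub>R w)) (\<lambda>y. \<bar>-\<epsilon>\<bar> ^ DIM('a) *\<^sub>R G y)"
    by (rule integral_density) auto
  also have "\<dots> = (\<integral>w. \<bar>-\<epsilon>\<bar> ^ DIM('a) *\<^sub>R G (x + (-\<epsilon>) *\<^sub>R w) \<partial>lborel)"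
    by (rule integral_distr) auto
  also have "\<dots> = (\<integral>w. \<phi> w * f (x - \<epsilon> *\<^sub>R w) \<partial>lborel)"
  proof (intro Bochner_Integration.integral_cong refl)
    fix w
    have "\<bar>-\<epsilon>\<bar> ^ DIM('a) * (1 / \<epsilon>) ^ DIM('a) = 1"
      using e by (simp add: power_mult_distrib[symmetric])
    moreover have "(1 / \<epsilon>) *\<^sub>R (x - (x + - \<epsilon> *\<^sub>R w)) = w" using e by simp
    ultimately show "\<bar>-\<epsilon>\<bar> ^ DIM('a) *\<^sub>R G (x + (-\<epsilon>) *\<^sub>R w) = \<phi> w * f (x - \<epsilon> *\<^sub>R w)"
      unfolding G_def mollify_def by (simp add: mult.assoc[symmetric])
  qed
  finally show ?thesis .
qed

lemma conv_pointwise: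
  fixes \<phi> f :: "'a::euclidean_space \<Rightarrow> real"
  assumes \<phi>: "integrable lborel \<phi>" and \<phi>1: "(\<integral>y. \<phi> y \<partial>lborel) = 1"
    and f[measurable]: "f \<in> borel_measurable borel" and e: "\<epsilon> > 0"
  shows "ennreal \<bar>f x - convol (mollify \<phi> \<epsilon>) f x\<bar> \<le> (\<integral>\<^sup>+w. ennreal \<bar>\<phi> w\<bar> * ennreal \<bar>f x - f (x - \<epsilon> *\<^sub>R w)\<bar> \<partial>lborel)"
proof -
  have \<phi>m[measurable]: "\<phi> \<in> borel_measurable borel"
    using borel_measurable_integrable[OF \<phi>] by simp
  define k where "k w = \<phi> w * f (x - \<epsilon> *\<^sub>R w)" for w
  have km[measurable]: "k \<in> borel_measurable borel" unfolding k_def by measurable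
  have cv: "convol (mollify \<phi> \<epsilon>) f x = integral\<^sup>L lborel k"
    unfolding k_def by (rule convol_cv[OF \<phi>m f e])
  show ?thesis
  proof (cases "integrable lborel k")
    case True
    have i1: "integrable lborel (\<lambda>w. \<phi> w * f x)" using \<phi> by simp
    have "f x = (\<integral>w. \<phi> w * f x \<partial>lborel)" using \<phi>1 by simp
    then have "f x - convol (mollify \<phi> \<epsilon>) f x = (\<integral>w. \<phi> w * f x - k w \<partial>lborel)"
      unfolding cv using i1 True by (simp add: Bochner_Integration.integral_diff)
    also have "\<dots> = (\<integral>w. \<phi> w * (f x - f (x - \<epsilon> *\<^sub>R w)) \<partial>lborel)"
      unfolding k_def by (simp add: right_diff_distrib)
    finally have eq: "f x - convol (mollify \<phi> \<epsilon>) f x = (\<integral>w. \<phi> w * (f x - f (x - \<epsilon> *\<^sub>R w)) \<partial>lborel)" .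
    have i2: "integrable lborel (\<lambda>w. \<phi> w * (f x - f (x - \<epsilon> *\<^sub>R w)))"
      using Bochner_Integration.integrable_diff[OF i1 True] unfolding k_def by (simp add: right_diff_distrib)
    have "ennreal \<bar>f x - convol (mollify \<phi> \<epsilon>) f x\<bar> \<le> (\<integral>\<^sup>+w. norm (\<phi> w * (f x - f (x - \<epsilon> *\<^sub>R w))) \<partial>lborel)"
      unfolding eq using integral_norm_bound_ennreal[OF i2] by simp
    also have "\<dots> = (\<integral>\<^sup>+w. ennreal \<bar>\<phi> w\<bar> * ennreal \<bar>f x - f (x - \<epsilon> *\<^sub>R w)\<bar> \<partial>lborel)"
      by (intro nn_integral_cong) (simp add: abs_mult ennreal_mult)
    finally show ?thesis .
  next
    case False
    then have c0: "convol (mollify \<phi> \<epsilon>) f x = 0" unfolding cv by (rule not_integrable_integral_eq)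
    have inf: "(\<integral>\<^sup>+w. ennreal (norm (k w)) \<partial>lborel) = \<infinity>"
      using False by (simp add: integrable_iff_bounded not_less top_unique)
    have phifin: "(\<integral>\<^sup>+w. ennreal \<bar>\<phi> w\<bar> \<partial>lborel) < \<infinity>"
      using \<phi> by (simp add: integrable_iff_bounded)
    define RHS where "RHS = (\<integral>\<^sup>+w. ennreal \<bar>\<phi> w\<bar> * ennreal \<bar>f x - f (x - \<epsilon> *\<^sub>R w)\<bar> \<partial>lborel)"
    have "(\<integral>\<^sup>+w. ennreal (norm (k w)) \<partial>lborel) \<le>
        (\<integral>\<^sup>+w. ennreal \<bar>\<phi> w\<bar> * ennreal \<bar>f x - f (x - \<epsilon> *\<^sub>R w)\<bar> + ennreal \<bar>f x\<bar> * ennreal \<bar>\<phi> w\<bar> \<partial>lborel)"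
    proof (intro nn_integral_mono)
      fix w
      have "\<bar>f (x - \<epsilon> *\<^sub>R w)\<bar> \<le> \<bar>f x - f (x - \<epsilon> *\<^sub>R w)\<bar> + \<bar>f x\<bar>" by linarith
      then have "\<bar>\<phi> w\<bar> * \<bar>f (x - \<epsilon> *\<^sub>R w)\<bar> \<le> \<bar>\<phi> w\<bar> * \<bar>f x - f (x - \<epsilon> *\<^sub>R w)\<bar> + \<bar>f x\<bar> * \<bar>\<phi> w\<bar>"
        by (metis abs_ge_zero distrib_left mult.commute mult_left_mono)
      then have "ennreal (\<bar>\<phi> w\<bar> * \<bar>f (x - \<epsilon> *\<^sub>R w)\<bar>) \<le> ennreal (\<bar>\<phi> w\<bar> * \<bar>f x - f (x - \<epsilon> *\<^sub>R w)\<bar> + \<bar>f x\<bar> * \<bar>\<phi> w\<bar>)"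
        by (rule ennreal_leI)
      then show "ennreal (norm (k w)) \<le> ennreal \<bar>\<phi> w\<bar> * ennreal \<bar>f x - f (x - \<epsilon> *\<^sub>R w)\<bar> + ennreal \<bar>f x\<bar> * ennreal \<bar>\<phi> w\<bar>"
        unfolding k_def by (simp add: abs_mult ennreal_mult ennreal_plus)
    qed
    also have "\<dots> = RHS + ennreal \<bar>f x\<bar> * (\<integral>\<^sup>+w. ennreal \<bar>\<phi> w\<bar> \<partial>lborel)"
      unfolding RHS_def by (simp add: nn_integral_add nn_integral_cmult)
    finally have "RHS + ennreal \<bar>f x\<bar> * (\<integral>\<^sup>+w. ennreal \<bar>\<phi> w\<bar> \<partial>lborel) = \<infinity>"
      using inf by (simp add: top_unique)
    moreover have "ennreal \<bar>f x\<bar> * (\<integral>\<^sup>+w. ennreal \<bar>\<phi> w\<bar> \<partial>lborel) < \<infinity>"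
      using phifin by (simp add: ennreal_mult_less_top)
    ultimately have "RHS = \<infinity>" by (auto simp: top_unique ennreal_add_eq_top)
    then show ?thesis unfolding RHS_def by simp
  qed
qed

lemma mollify_bound:
  fixes \<phi> f :: "'a::euclidean_space \<Rightarrow> real"
  assumes \<phi>: "integrable lborel \<phi>" and \<phi>1: "(\<integral>y. \<phi> y \<partial>lborel) = 1"
    and f[measurable]: "f \<in> borel_measurable borel" and e: "\<epsilon> > 0"
  shows "B_norm (\<lambda>x. f x - convol (mollify \<phi> \<epsilon>) f x) \<le> (\<integral>\<^sup>+w. ennreal \<bar>\<phi> w\<bar> * Dtr f (- (\<epsilon> *\<^sub>R w)) \<partial>lborel)"
proof -
  have \<phi>m[measurable]: "\<phi> \<in> borel_measurable borel"
    using borel_measurable_integrable[OF \<phi>] by simp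
  define H where "H p = ennreal \<bar>\<phi> (fst p)\<bar> * ennreal \<bar>f (snd p) - f (snd p - \<epsilon> *\<^sub>R fst p)\<bar>" for p :: "'a \<times> 'a"
  have Hm[measurable]: "H \<in> borel_measurable (lborel \<Otimes>\<^sub>M lborel)" unfolding H_def by measurable
  have "B_norm (\<lambda>x. f x - convol (mollify \<phi> \<epsilon>) f x) \<le> Be (\<lambda>x. \<integral>\<^sup>+w. H (w, x) \<partial>lborel)"
    unfolding B_norm_eq H_def by (intro Be_mono) (simp add: conv_pointwise[OF \<phi> \<phi>1 f e])
  also have "\<dots> \<le> (\<integral>\<^sup>+w. Be (\<lambda>x. H (w, x)) \<partial>lborel)" by (rule Be_Minkowski[OF Hm])
  also have "\<dots> = (\<integral>\<^sup>+w. ennreal \<bar>\<phi> w\<bar> * Dtr f (- (\<epsilon> *\<^sub>R w)) \<partial>lborel)"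
  proof (intro nn_integral_cong)
    fix w
    have "Be (\<lambda>x. H (w, x)) = ennreal \<bar>\<phi> w\<bar> * Be (\<lambda>x. ennreal \<bar>f x - f (x - \<epsilon> *\<^sub>R w)\<bar>)"
      unfolding H_def by (simp add: Be_cmult)
    also have "(\<lambda>x. ennreal \<bar>f x - f (x - \<epsilon> *\<^sub>R w)\<bar>) = (\<lambda>x. ennreal \<bar>f (x + - (\<epsilon> *\<^sub>R w)) - f x\<bar>)"
      by (simp add: abs_minus_commute)
    finally show "Be (\<lambda>x. H (w, x)) = ennreal \<bar>\<phi> w\<bar> * Dtr f (- (\<epsilon> *\<^sub>R w))" unfolding Dtr_def .
  qed
  finally show ?thesis .
qed

definition Kphi :: "('a::euclidean_space \<Rightarrow> real) \<Rightarrow> ennreal" where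
  "Kphi \<phi> = (\<integral>\<^sup>+w. ennreal \<bar>\<phi> w\<bar> * ennreal (22 + 16 * sqrt (norm w)) \<partial>lborel)"

lemma Kphi_fin:
  fixes \<phi> :: "'a::euclidean_space \<Rightarrow> real"
  assumes \<phi>: "integrable lborel \<phi>" and mom: "(\<integral>\<^sup>+ y. ennreal (sqrt (norm y) * \<bar>\<phi> y\<bar>) \<partial>lborel) < \<infinity>"
  shows "Kphi \<phi> < \<infinity>"
proof -
  have \<phi>m[measurable]: "\<phi> \<in> borel_measurable borel"
    using borel_measurable_integrable[OF \<phi>] by simp
  have phifin: "(\<integral>\<^sup>+w. ennreal \<bar>\<phi> w\<bar> \<partial>lborel) < \<infinity>"
    using \<phi> by (simp add: integrable_iff_bounded)
  have "Kphi \<phi> = (\<integral>\<^sup>+w. 22 * ennreal \<bar>\<phi> w\<bar> + 16 * ennreal (sqrt (norm w) * \<bar>\<phi> w\<bar>) \<partial>lborel)"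
    unfolding Kphi_def
  proof (intro nn_integral_cong)
    fix w :: 'a
    have "ennreal \<bar>\<phi> w\<bar> * ennreal (22 + 16 * sqrt (norm w)) = ennreal (22 * \<bar>\<phi> w\<bar> + 16 * (sqrt (norm w) * \<bar>\<phi> w\<bar>))"
      by (subst ennreal_mult[symmetric]) (auto simp: algebra_simps)
    also have "\<dots> = 22 * ennreal \<bar>\<phi> w\<bar> + 16 * ennreal (sqrt (norm w) * \<bar>\<phi> w\<bar>)"
      by (simp add: ennreal_plus ennreal_mult)
    finally show "ennreal \<bar>\<phi> w\<bar> * ennreal (22 + 16 * sqrt (norm w)) = 22 * ennreal \<bar>\<phi> w\<bar> + 16 * ennreal (sqrt (norm w) * \<bar>\<phi> w\<bar>)" .
  qed
  also have "\<dots> = 22 * (\<integral>\<^sup>+w. ennreal \<bar>\<phi> w\<bar> \<partial>lborel) + 16 * (\<integral>\<^sup>+ y. ennreal (sqrt (norm y) * \<bar>\<phi> y\<bar>) \<partial>lborel)"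
    by (simp add: nn_integral_add nn_integral_cmult)
  also have "\<dots> < \<infinity>" using phifin mom by (simp add: ennreal_mult_less_top)
  finally show ?thesis .
qed

lemma per_t_bound:
  fixes \<phi> f :: "'a::euclidean_space \<Rightarrow> real"
  assumes \<phi>: "integrable lborel \<phi>" and \<phi>1: "(\<integral>y. \<phi> y \<partial>lborel) = 1"
    and f[measurable]: "f \<in> borel_measurable borel" and e: "\<epsilon> > 0" "\<epsilon> \<le> 1"
  shows "B_norm (\<lambda>x. f x - convol (mollify \<phi> \<epsilon>) f x) \<le> Kphi \<phi> * B_norm f"
proof -
  have \<phi>m[measurable]: "\<phi> \<in> borel_measurable borel"
    using borel_measurable_integrable[OF \<phi>] by simp
  have "B_norm (\<lambda>x. f x - convol (mollify \<phi> \<epsilon>) f x) \<le> (\<integral>\<^sup>+w. ennreal \<bar>\<phi> w\<bar> * Dtr f (- (\<epsilon> *\<^sub>R w)) \<partial>lborel)"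
    by (rule mollify_bound[OF \<phi> \<phi>1 f e(1)])
  also have "\<dots> \<le> (\<integral>\<^sup>+w. ennreal \<bar>\<phi> w\<bar> * ennreal (22 + 16 * sqrt (norm w)) * B_norm f \<partial>lborel)"
  proof (intro nn_integral_mono)
    fix w :: 'a
    have "norm (- (\<epsilon> *\<^sub>R w)) \<le> norm w" using e by (simp add: mult_left_le_one_le)
    then have "ennreal (22 + 16 * sqrt (norm (- (\<epsilon> *\<^sub>R w)))) \<le> ennreal (22 + 16 * sqrt (norm w))"
      by (intro ennreal_leI) simp
    then have "Dtr f (- (\<epsilon> *\<^sub>R w)) \<le> ennreal (22 + 16 * sqrt (norm w)) * B_norm f"
      using Dtr_bound[OF f, of "- (\<epsilon> *\<^sub>R w)"] by (meson mult_right_mono order_trans zero_le)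
    then show "ennreal \<bar>\<phi> w\<bar> * Dtr f (- (\<epsilon> *\<^sub>R w)) \<le> ennreal \<bar>\<phi> w\<bar> * ennreal (22 + 16 * sqrt (norm w)) * B_norm f"
      by (simp add: mult.assoc mult_left_mono)
  qed
  also have "\<dots> = Kphi \<phi> * B_norm f"
    unfolding Kphi_def by (rule nn_integral_multc) measurable
  finally show ?thesis .
qed

lemma per_t_lim:
  fixes \<phi> f :: "'a::euclidean_space \<Rightarrow> real"
  assumes \<phi>: "integrable lborel \<phi>" and \<phi>1: "(\<integral>y. \<phi> y \<partial>lborel) = 1"
    and mom: "(\<integral>\<^sup>+ y. ennreal (sqrt (norm y) * \<bar>\<phi> y\<bar>) \<partial>lborel) < \<infinity>"
    and f[measurable]: "f \<in> borel_measurable borel" and fB: "B_norm f < \<infinity>"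
  shows "((\<lambda>\<epsilon>. B_norm (\<lambda>x. f x - convol (mollify \<phi> \<epsilon>) f x)) \<longlongrightarrow> 0) (at_right 0)"
proof (rule ennreal_tendsto_0I)
  fix e :: real assume e: "e > 0"
  have \<phi>m[measurable]: "\<phi> \<in> borel_measurable borel"
    using borel_measurable_integrable[OF \<phi>] by simp
  define N where "N = (\<integral>\<^sup>+w. ennreal \<bar>\<phi> w\<bar> \<partial>lborel)"
  have Nfin: "N < \<infinity>" using \<phi> unfolding N_def by (simp add: integrable_iff_bounded)
  define N' where "N' = enn2real N"
  have NN: "N = ennreal N'" "N' \<ge> 0" using Nfin unfolding N'_def by (auto simp: less_top)
  define B' where "B' = enn2real (B_norm f)"
  have BB: "B_norm f = ennreal B'" "B' \<ge> 0" using fB unfolding B'_def by (auto simp: less_top)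
  define W where "W w = ennreal \<bar>\<phi> w\<bar> * ennreal (22 + 16 * sqrt (norm w))" for w :: 'a
  have Wm[measurable]: "W \<in> borel_measurable borel" unfolding W_def by measurable
  define t where "t n = (\<integral>\<^sup>+w. W w * indicator {w. real n < norm w} w \<partial>lborel)" for n :: nat
  have "t \<longlonglongrightarrow> (\<integral>\<^sup>+w. 0 \<partial>(lborel :: 'a measure))"
    unfolding t_def
  proof (rule nn_integral_dominated_convergence[of "\<lambda>n w. W w * indicator {w. real n < norm w} w" lborel "\<lambda>w. 0" W])
    show "(\<integral>\<^sup>+w. W w \<partial>lborel) < \<infinity>" using Kphi_fin[OF \<phi> mom] unfolding Kphi_def W_def .
    show "AE w in lborel. W w * indicator {w. real n < norm w} w \<le> W w" for n
      by (intro AE_I2) (auto simp: indicator_def)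
    show "AE w in lborel. (\<lambda>n. W w * indicator {w. real n < norm w} w) \<longlonglongrightarrow> 0"
    proof (intro AE_I2)
      fix w :: 'a
      obtain m :: nat where m: "norm w < real m" using reals_Archimedean2 by blast
      have "eventually (\<lambda>n. W w * indicator {w. real n < norm w} w = 0) sequentially"
        using eventually_ge_at_top[of m]
        by (rule eventually_mono) (use m in \<open>auto simp: indicator_def\<close>)
      then show "(\<lambda>n. W w * indicator {w. real n < norm w} w) \<longlonglongrightarrow> 0" by (rule tendsto_eventually)
    qed
  qed auto
  then have "t \<longlonglongrightarrow> 0" by simp
  from order_tendstoD(2)[OF this, of "ennreal (e / (2 * (B' + 1)))"] e BB(2)
  obtain n where tn: "t n < ennreal (e / (2 * (B' + 1)))" by (auto simp: eventually_sequentially)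
  define \<eta> where "\<eta> = e / (2 * (N' + 1))"
  have \<eta>: "\<eta> > 0" using e NN(2) unfolding \<eta>_def by simp
  have "Dtr f \<midarrow>0\<rightarrow> 0"
    unfolding Dtr_def using Be_translate_cont[OF f] fB unfolding B_norm_eq by simp
  from order_tendstoD(2)[OF this, of "ennreal \<eta>"] \<eta>
  obtain d where d: "d > 0" and dD: "\<And>h. h \<noteq> 0 \<Longrightarrow> dist h 0 < d \<Longrightarrow> Dtr f h < ennreal \<eta>"
    by (auto simp: eventually_at)
  have dD': "Dtr f h \<le> ennreal \<eta>" if "norm h < d" for h
    using dD[of h] that by (cases "h = 0") (auto simp: Dtr_0)
  define b where "b = min 1 (d / (real n + 1))"
  have b: "b > 0" using d unfolding b_def by simp
  show "eventually (\<lambda>\<epsilon>. B_norm (\<lambda>x. f x - convol (mollify \<phi> \<epsilon>) f x) \<le> ennreal e) (at_right 0)"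
    unfolding eventually_at_right_field
  proof (intro exI[of _ b] conjI allI impI b)
    fix \<epsilon> :: real assume e0: "0 < \<epsilon>" and eb: "\<epsilon> < b"
    have e1: "\<epsilon> \<le> 1" using eb unfolding b_def by simp
    have pw: "ennreal \<bar>\<phi> w\<bar> * Dtr f (- (\<epsilon> *\<^sub>R w)) \<le> ennreal \<eta> * ennreal \<bar>\<phi> w\<bar> + W w * indicator {w. real n < norm w} w * B_norm f" for w
    proof (cases "norm w \<le> real n")
      case True
      have "norm (- (\<epsilon> *\<^sub>R w)) = \<epsilon> * norm w" using e0 by simp
      also have "\<dots> \<le> \<epsilon> * real n" using True e0 by (intro mult_left_mono) auto
      also have "\<dots> < d"
      proof -
        have bb: "b \<le> d / (real n + 1)" unfolding b_def by simp
        have "\<epsilon> * real n \<le> \<epsilon> * (real n + 1)" using e0 by simp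
        also have "\<dots> < b * (real n + 1)" using eb by (intro mult_strict_right_mono) auto
        also have "\<dots> \<le> d" using bb by (simp add: le_divide_eq)
        finally show ?thesis .
      qed
      finally have "Dtr f (- (\<epsilon> *\<^sub>R w)) \<le> ennreal \<eta>" by (rule dD')
      then have "ennreal \<bar>\<phi> w\<bar> * Dtr f (- (\<epsilon> *\<^sub>R w)) \<le> ennreal \<eta> * ennreal \<bar>\<phi> w\<bar>"
        by (subst mult.commute) (rule mult_right_mono, auto)
      then show ?thesis by (simp add: add_increasing2)
    next
      case False
      have "norm (- (\<epsilon> *\<^sub>R w)) \<le> norm w" using e0 e1 by (simp add: mult_left_le_one_le)
      then have "ennreal (22 + 16 * sqrt (norm (- (\<epsilon> *\<^sub>R w)))) \<le> ennreal (22 + 16 * sqrt (norm w))"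
        by (intro ennreal_leI) simp
      then have "Dtr f (- (\<epsilon> *\<^sub>R w)) \<le> ennreal (22 + 16 * sqrt (norm w)) * B_norm f"
        using Dtr_bound[OF f, of "- (\<epsilon> *\<^sub>R w)"] by (meson mult_right_mono order_trans zero_le)
      then have "ennreal \<bar>\<phi> w\<bar> * Dtr f (- (\<epsilon> *\<^sub>R w)) \<le> W w * indicator {w. real n < norm w} w * B_norm f"
        using False unfolding W_def by (simp add: mult.assoc mult_left_mono indicator_def)
      then show ?thesis by (simp add: add_increasing)
    qed
    have "B_norm (\<lambda>x. f x - convol (mollify \<phi> \<epsilon>) f x) \<le> (\<integral>\<^sup>+w. ennreal \<bar>\<phi> w\<bar> * Dtr f (- (\<epsilon> *\<^sub>R w)) \<partial>lborel)"
      by (rule mollify_bound[OF \<phi> \<phi>1 f e0])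
    also have "\<dots> \<le> (\<integral>\<^sup>+w. ennreal \<eta> * ennreal \<bar>\<phi> w\<bar> + W w * indicator {w. real n < norm w} w * B_norm f \<partial>lborel)"
      by (intro nn_integral_mono pw)
    also have "\<dots> = ennreal \<eta> * N + t n * B_norm f"
      unfolding N_def t_def by (simp add: nn_integral_add nn_integral_cmult nn_integral_multc)
    also have "\<dots> \<le> ennreal (e/2) + ennreal (e/2)"
    proof (intro add_mono)
      have "ennreal \<eta> * N = ennreal (\<eta> * N')" unfolding NN using \<eta> NN by (simp add: ennreal_mult)
      also have "\<eta> * N' \<le> e / 2" unfolding \<eta>_def using e NN(2) by (simp add: field_simps)
      finally show "ennreal \<eta> * N \<le> ennreal (e/2)" by (simp add: ennreal_leI)
      have "t n * B_norm f \<le> ennreal (e / (2 * (B' + 1))) * ennreal B'"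
        unfolding BB using tn by (intro mult_right_mono) auto
      also have "\<dots> = ennreal (e / (2 * (B' + 1)) * B')" using BB e by (subst ennreal_mult) auto
      also have "e / (2 * (B' + 1)) * B' \<le> e / 2" using e BB(2) by (simp add: field_simps)
      finally show "t n * B_norm f \<le> ennreal (e/2)" by (simp add: ennreal_leI)
    qed
    also have "\<dots> = ennreal e" using e by (simp flip: ennreal_plus)
    finally show "B_norm (\<lambda>x. f x - convol (mollify \<phi> \<epsilon>) f x) \<le> ennreal e" .
  qed
qed

lemma G_measurable:
  fixes \<phi> :: "'a::euclidean_space \<Rightarrow> real" and U :: "real \<Rightarrow> 'a \<Rightarrow> real"
  assumes \<phi>m[measurable]: "\<phi> \<in> borel_measurable borel"
    and U_meas[measurable]: "(\<lambda>(t, x). U t x) \<in> borel_measurable (lborel \<Otimes>\<^sub>M lborel)"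
  shows "(\<lambda>t. B_norm (\<lambda>x. U t x - convol (mollify \<phi> \<epsilon>) (U t) x)) \<in> borel_measurable lborel"
proof -
  have Um[measurable]: "(\<lambda>p. U (fst p) (snd p)) \<in> borel_measurable (lborel \<Otimes>\<^sub>M lborel)"
    using U_meas by (simp add: case_prod_beta')
  define C where "C p = (\<integral>y. mollify \<phi> \<epsilon> (snd p - y) * U (fst p) y \<partial>lborel)" for p :: "real \<times> 'a"
  have "(\<lambda>(p, y). mollify \<phi> \<epsilon> (snd p - y) * U (fst p) y) \<in> borel_measurable ((lborel \<Otimes>\<^sub>M lborel) \<Otimes>\<^sub>M lborel)"
    unfolding mollify_def by measurable
  then have Cm[measurable]: "C \<in> borel_measurable (lborel \<Otimes>\<^sub>M lborel)"
    unfolding C_def by (rule lborel.borel_measurable_lebesgue_integral)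
  have eq: "B_norm (\<lambda>x. U t x - convol (mollify \<phi> \<epsilon>) (U t) x) =
     (\<Sum>j. ennreal (2 powr (real j / 2)) * esq (\<integral>\<^sup>+x. (ennreal \<bar>U t x - C (t, x)\<bar>)^2 * indicator (dyadic_shell j) x \<partial>lborel))" for t
    unfolding B_norm_eq Be_def L2e_def C_def convol_def by simp
  show ?thesis unfolding eq by measurable
qed


theorem lemma3p3:
  fixes \<phi> :: "'a::euclidean_space \<Rightarrow> real"
    and U :: "real \<Rightarrow> 'a \<Rightarrow> real"
    and T :: real
  assumes phi_L1: "integrable lborel \<phi>"
    and phi_int: "(\<integral> y. \<phi> y \<partial>lborel) = 1"
    and phi_moment: "(\<integral>\<^sup>+ y. ennreal (sqrt (norm y) * \<bar>\<phi> y\<bar>) \<partial>lborel) < \<infinity>"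
    and T_pos: "T > 0"
    and U_meas: "(\<lambda>(t, x). U t x) \<in> borel_measurable (lborel \<Otimes>\<^sub>M lborel)"
    and U_L1B: "(\<integral>\<^sup>+ t \<in> {0<..<T}. B_norm (U t) \<partial>lborel) < \<infinity>"
  shows "((\<lambda>\<epsilon>. \<integral>\<^sup>+ t \<in> {0<..<T}.
            B_norm (\<lambda>x. U t x - convol (mollify \<phi> \<epsilon>) (U t) x) \<partial>lborel)
          \<longlongrightarrow> 0) (at_right 0)"
proof -
  have \<phi>m[measurable]: "\<phi> \<in> borel_measurable borel"
    using borel_measurable_integrable[OF phi_L1] by simp
  have Um[measurable]: "(\<lambda>(t, x). U t x) \<in> borel_measurable (lborel \<Otimes>\<^sub>M lborel)" by (rule U_meas)
  have Ut[measurable]: "U t \<in> borel_measurable borel" for t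
    using measurable_Pair2[OF U_meas, of t] by simp
  define G where "G \<epsilon> t = B_norm (\<lambda>x. U t x - convol (mollify \<phi> \<epsilon>) (U t) x)" for \<epsilon> t
  have Gm[measurable]: "G \<epsilon> \<in> borel_measurable borel" for \<epsilon>
    using G_measurable[OF \<phi>m U_meas, of \<epsilon>] unfolding G_def by simp
  have B0: "(\<lambda>t. B_norm (U t)) \<in> borel_measurable borel"
  proof -
    have eq: "B_norm (U t) = (\<Sum>j. ennreal (2 powr (real j / 2)) * esq (\<integral>\<^sup>+x. (ennreal \<bar>(\<lambda>(t, x). U t x) (t, x)\<bar>)^2 * indicator (dyadic_shell j) x \<partial>lborel))" for t
      unfolding B_norm_eq Be_def L2e_def by simp
    show ?thesis unfolding eq by measurable
  qed
  have Bm[measurable]: "(\<lambda>t. B_norm (U t)) \<in> borel_measurable borel" by (rule B0)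
  define K where "K = Kphi \<phi>"
  have Kfin: "K < \<infinity>" unfolding K_def by (rule Kphi_fin[OF phi_L1 phi_moment])
  have AEfin: "AE t in lborel. B_norm (U t) * indicator {0<..<T} t \<noteq> \<infinity>"
    by (rule nn_integral_noteq_infinite) (use U_L1B in auto)
  show ?thesis
  proof (rule tendsto_at_right_sequentially[where b=1])
    show "(0::real) < 1" by simp
    fix S :: "nat \<Rightarrow> real" assume S0: "\<And>n. 0 < S n" and S1: "\<And>n. S n < 1" and "decseq S" and Sl: "S \<longlonglongrightarrow> 0"
    have SF: "filterlim S (at_right 0) sequentially"
      using Sl S0 by (intro tendsto_imp_filterlim_at_right) auto
    have "(\<lambda>n. \<integral>\<^sup>+t. G (S n) t * indicator {0<..<T} t \<partial>lborel) \<longlonglongrightarrow> (\<integral>\<^sup>+t. 0 \<partial>(lborel :: real measure))"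
    proof (rule nn_integral_dominated_convergence[of "\<lambda>n t. G (S n) t * indicator {0<..<T} t" lborel "\<lambda>t. 0"
          "\<lambda>t. K * (B_norm (U t) * indicator {0<..<T} t)"])
      show "AE t in lborel. G (S n) t * indicator {0<..<T} t \<le> K * (B_norm (U t) * indicator {0<..<T} t)" for n
      proof (intro AE_I2)
        fix t
        have "G (S n) t \<le> K * B_norm (U t)"
          unfolding G_def K_def using S0[of n] S1[of n] by (intro per_t_bound[OF phi_L1 phi_int Ut]) auto
        then show "G (S n) t * indicator {0<..<T} t \<le> K * (B_norm (U t) * indicator {0<..<T} t)"
          by (auto simp: indicator_def)
      qed
      show "(\<integral>\<^sup>+t. K * (B_norm (U t) * indicator {0<..<T} t) \<partial>lborel) < \<infinity>"
        using Kfin U_L1B by (simp add: nn_integral_cmult ennreal_mult_less_top)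
      show "AE t in lborel. (\<lambda>n. G (S n) t * indicator {0<..<T} t) \<longlonglongrightarrow> 0"
        using AEfin
      proof (rule AE_mp, intro AE_I2 impI)
        fix t assume fin: "B_norm (U t) * indicator {0<..<T} t \<noteq> \<infinity>"
        show "(\<lambda>n. G (S n) t * indicator {0<..<T} t) \<longlonglongrightarrow> 0"
        proof (cases "t \<in> {0<..<T}")
          case True
          then have "B_norm (U t) < \<infinity>" using fin by (simp add: less_top)
          then have "((\<lambda>\<epsilon>. G \<epsilon> t) \<longlongrightarrow> 0) (at_right 0)"
            unfolding G_def by (rule per_t_lim[OF phi_L1 phi_int phi_moment Ut])
          then have "(\<lambda>n. G (S n) t) \<longlonglongrightarrow> 0" by (rule filterlim_compose[OF _ SF])
          then show ?thesis using True by simp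
        next
          case False
          then show ?thesis by simp
        qed
      qed
    qed auto
    then show "(\<lambda>n. \<integral>\<^sup>+ t \<in> {0<..<T}. B_norm (\<lambda>x. U t x - convol (mollify \<phi> (S n)) (U t) x) \<partial>lborel) \<longlonglongrightarrow> 0"
      unfolding G_def by simp
  qed
qed


end
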